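(* For every $\beta,c\ge0$ and $N\in\mathbb N$, $$\mathcal P(\beta,c)-p_N(\beta,c)=\frac12\sum_{R=1}^\infty\frac{(1-e^{-\beta})^R}{R}\sum_{s\in[q]^R}\int_0^c\Big\langle\!\Big\langle\big(\rho_{\Sigma_R}(s)-q^{-R}\big)^2\Big\rangle\!\Big\rangle_{N,\beta,c'}\,dc'.$$ In particular $p_N(\beta,c)\le\mathcal P(\beta,c)$.
   Context: Fix an integer $q\ge2$, $[q]=\{1,\dots,q\}$. For $\sigma\in[q]^N$ and a real $N\times N$ matrix $J$, $H_N(\sigma,J)=\sum_{i,j=1}^N J_{ij}\delta(\sigma_i,\sigma_j)$ ($\delta$ the Kronecker delta), $Z_N(J)=\sum_{\sigma\in[q]^N}e^{-H_N(\sigma,J)}$, $\omega_{N,J}(\sigma)=e^{-H_N(\sigma,J)}/Z_N(J)$. For $c\ge0$, $\mathbb P_{N,c}$ is the law of a random $N\times N$ matrix $J$ with independent entries each Poisson with mean $c/(2N)$, expectation $\mathbb E_{N,c}$; $p_N(\beta,c)=\mathbb E_{N,c}[N^{-1}\ln Z_N(\beta J)]$. The annealed pressure is $\mathcal P(\beta,c)=\ln q+\frac c2\ln\big(1-\frac{1-e^{-\beta}}{q}\big)$. For $R\in\mathbb N$ and $R$ replicas $\Sigma_R=(\sigma^{(1)},\dots,\sigma^{(R)})\in([q]^N)^R$, the empirical measure is $\rho_{\Sigma_R}(s)=\frac1N\sum_{i=1}^N\prod_{r=1}^R\delta(\sigma^{(r)}_i,s_r)$ for $s=(s_1,\dots,s_R)\in[q]^R$.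 For $F:([q]^N)^R\to\mathbb R$, $\langle\!\langle F\rangle\!\rangle_{N,\beta,c}=\mathbb E_{N,c}\big[\sum_{\sigma^{(1)},\dots,\sigma^{(R)}}F(\sigma^{(1)},\dots,\sigma^{(R)})\prod_{r=1}^R\omega_{N,\beta J}(\sigma^{(r)})\big]$. *)

theory Defs
  imports "HOL-Probability.Probability"
begin

definition configs :: "nat \<Rightarrow> nat \<Rightarrow> (nat \<Rightarrow> nat) set" where
  "configs q N = PiE {..<N} (\<lambda>_. {1..q})"

definition kdelta :: "nat \<Rightarrow> nat \<Rightarrow> real" where
  "kdelta a b = (if a = b then 1 else 0)"

definition hamiltonian :: "nat \<Rightarrow> (nat \<Rightarrow> nat) \<Rightarrow> (nat \<times> nat \<Rightarrow> real) \<Rightarrow> real" where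
  "hamiltonian N \<sigma> J = (\<Sum>i<N. \<Sum>j<N. J (i, j) * kdelta (\<sigma> i) (\<sigma> j))"

definition partition_fn :: "nat \<Rightarrow> nat \<Rightarrow> (nat \<times> nat \<Rightarrow> real) \<Rightarrow> real" where
  "partition_fn q N J = (\<Sum>\<sigma>\<in>configs q N. exp (- hamiltonian N \<sigma> J))"

definition gibbs :: "nat \<Rightarrow> nat \<Rightarrow> (nat \<times> nat \<Rightarrow> real) \<Rightarrow> (nat \<Rightarrow> nat) \<Rightarrow> real" where
  "gibbs q N J \<sigma> = exp (- hamiltonian N \<sigma> J) / partition_fn q N J"

definition poisson_dist :: "real \<Rightarrow> nat pmf" where
  "poisson_dist rate = (if 0 < rate then poisson_pmf rate else return_pmf 0)"

definition J_law :: "nat \<Rightarrow> real \<Rightarrow> (nat \<times> nat \<Rightarrow> nat) pmf" where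
  "J_law N c = Pi_pmf ({..<N} \<times> {..<N}) 0 (\<lambda>_. poisson_dist (c / (2 * real N)))"

definition E_Nc :: "nat \<Rightarrow> real \<Rightarrow> ((nat \<times> nat \<Rightarrow> nat) \<Rightarrow> real) \<Rightarrow> real" where
  "E_Nc N c f = measure_pmf.expectation (J_law N c) f"

definition scaled :: "real \<Rightarrow> (nat \<times> nat \<Rightarrow> nat) \<Rightarrow> (nat \<times> nat \<Rightarrow> real)" where
  "scaled \<beta> J = (\<lambda>ij. \<beta> * real (J ij))"

definition pressure :: "nat \<Rightarrow> nat \<Rightarrow> real \<Rightarrow> real \<Rightarrow> real" where
  "pressure q N \<beta> c = E_Nc N c (\<lambda>J. ln (partition_fn q N (scaled \<beta> J)) / real N)"

definition annealed_pressure :: "nat \<Rightarrow> real \<Rightarrow> real \<Rightarrow> real" where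
  "annealed_pressure q \<beta> c = ln (real q) + c / 2 * ln (1 - (1 - exp (- \<beta>)) / real q)"

definition replicas :: "nat \<Rightarrow> nat \<Rightarrow> nat \<Rightarrow> (nat \<Rightarrow> nat \<Rightarrow> nat) set" where
  "replicas q N R = PiE {..<R} (\<lambda>_. configs q N)"

definition emp_measure :: "nat \<Rightarrow> nat \<Rightarrow> (nat \<Rightarrow> nat \<Rightarrow> nat) \<Rightarrow> (nat \<Rightarrow> nat) \<Rightarrow> real" where
  "emp_measure N R \<Sigma> s = (1 / real N) * (\<Sum>i<N. \<Prod>r<R. kdelta (\<Sigma> r i) (s r))"

definition replica_avg :: "nat \<Rightarrow> nat \<Rightarrow> real \<Rightarrow> real \<Rightarrow> nat \<Rightarrow> ((nat \<Rightarrow> nat \<Rightarrow> nat) \<Rightarrow> real) \<Rightarrow> real" where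
  "replica_avg q N \<beta> c R F = E_Nc N c (\<lambda>J. \<Sum>\<Sigma>\<in>replicas q N R.
      F \<Sigma> * (\<Prod>r<R. gibbs q N (scaled \<beta> J) (\<Sigma> r)))"

end

theory Submission
  imports Defs
begin
definition pp :: "real \<Rightarrow> nat \<Rightarrow> real" where
  "pp l k = l ^ k / fact k * exp (- l)"

lemma pmf_poisson_dist: "0 \<le> l \<Longrightarrow> pmf (poisson_dist l) k = pp l k"
  by (auto simp: poisson_dist_def pp_def indicator_def power_0_left)

lemma pp_nonneg: "0 \<le> l \<Longrightarrow> 0 \<le> pp l k"
  by (simp add: pp_def)

lemma nat_pmf_sums:
  fixes p :: "nat pmf" and f :: "nat \<Rightarrow> real"
  assumes "integrable p f"
  shows "(\<lambda>k. pmf p k * f k) sums measure_pmf.expectation p f"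
proof -
  have i: "integrable (count_space UNIV) (\<lambda>k. pmf p k * f k)"
    using assms unfolding measure_pmf_eq_density
    by (subst (asm) integrable_density) auto
  have "measure_pmf.expectation p f = integral\<^sup>L (count_space UNIV) (\<lambda>k. pmf p k * f k)"
    unfolding measure_pmf_eq_density by (subst integral_density) auto
  then show ?thesis using sums_integral_count_space_nat[OF i] by simp
qed

lemma nat_pmf_integrable:
  fixes p :: "nat pmf" and f :: "nat \<Rightarrow> real"
  assumes "summable (\<lambda>k. pmf p k * \<bar>f k\<bar>)"
  shows "integrable p f"
proof -
  have "integrable (count_space UNIV) (\<lambda>k. pmf p k * f k)"
    unfolding integrable_count_space_nat_iff using assms by (simp add: abs_mult)
  then show ?thesis unfolding measure_pmf_eq_density
    by (subst integrable_density) auto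
qed

lemma pp_sums1: "0 \<le> l \<Longrightarrow> pp l sums 1"
proof -
  assume l: "0 \<le> l"
  have "(\<lambda>n. exp (-l) * (l^n /\<^sub>R fact n)) sums (exp (-l) * exp l)"
    by (intro sums_mult exp_converges)
  moreover have "\<And>n. exp (-l) * (l^n /\<^sub>R fact n) = pp l n" by (simp add: pp_def field_simps)
  moreover have "exp (-l) * exp l = 1" by (simp add: exp_minus)
  ultimately show ?thesis by simp
qed

lemma pp_Suc: "pp l (Suc k) = l / real (Suc k) * pp l k"
  by (simp add: pp_def field_simps)

lemma pp_mean: "0 \<le> l \<Longrightarrow> (\<lambda>k. pp l k * real k) sums l"
proof -
  assume l: "0 \<le> l"
  have "(\<lambda>k. l * pp l k) sums (l * 1)" by (intro sums_mult pp_sums1 l)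
  then have "(\<lambda>k. pp l (Suc k) * real (Suc k)) sums l" by (simp add: pp_Suc)
  then have "(\<lambda>k. pp l k * real k) sums (l + pp l 0 * real 0)" by (rule iffD1[OF sums_Suc_iff[of "\<lambda>k. pp l k * real k"]])
  then show ?thesis by simp
qed

lemma pp_summable_lin: "0 \<le> l \<Longrightarrow> summable (\<lambda>k. pp l k * (1 + real k))"
proof -
  assume l: "0 \<le> l"
  have "summable (\<lambda>k. pp l k + pp l k * real k)"
    using summable_add[OF sums_summable[OF pp_sums1[OF l]] sums_summable[OF pp_mean[OF l]]] .
  then show ?thesis by (simp add: algebra_simps)
qed

lemma pmf_integral_bind_nonneg:
  fixes g :: "'b \<Rightarrow> real"
  assumes int: "integrable (bind_pmf M N) g" and nn: "\<And>y. 0 \<le> g y"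
  shows "integrable M (\<lambda>x. measure_pmf.expectation (N x) g)"
    and "measure_pmf.expectation (bind_pmf M N) g = measure_pmf.expectation M (\<lambda>x. measure_pmf.expectation (N x) g)"
    and "AE x in M. integrable (N x) g"
proof -
  define G where "G x = (\<integral>\<^sup>+y. ennreal (g y) \<partial>N x)" for x
  have e1: "(\<integral>\<^sup>+y. ennreal (g y) \<partial>bind_pmf M N) = ennreal (measure_pmf.expectation (bind_pmf M N) g)"
    using int nn by (intro nn_integral_eq_integral) auto
  have e2: "(\<integral>\<^sup>+y. ennreal (g y) \<partial>bind_pmf M N) = (\<integral>\<^sup>+x. G x \<partial>M)"
    by (simp add: G_def)
  have fin: "(\<integral>\<^sup>+x. G x \<partial>M) \<noteq> \<infinity>" using e1 e2 by (simp only: e2[symmetric] e1) simp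
  have ae: "AE x in M. G x \<noteq> \<infinity>"
    using fin by (intro nn_integral_noteq_infinite) auto
  have ae2: "AE x in M. integrable (N x) g \<and> ennreal (measure_pmf.expectation (N x) g) = G x"
    using ae
  proof (rule AE_mp, intro AE_I2 impI)
    fix x assume "G x \<noteq> \<infinity>"
    then obtain r where r: "G x = ennreal r" "0 \<le> r" by (cases "G x") auto
    then have "integrable (N x) g \<and> measure_pmf.expectation (N x) g = r"
      using nn by (subst nn_integral_eq_integrable[symmetric]) (auto simp: G_def)
    then show "integrable (N x) g \<and> ennreal (measure_pmf.expectation (N x) g) = G x"
      using r by simp
  qed
  then show "AE x in M. integrable (N x) g" by auto
  have "(\<integral>\<^sup>+x. ennreal (measure_pmf.expectation (N x) g) \<partial>M) = (\<integral>\<^sup>+x. G x \<partial>M)"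
    using ae2 by (intro nn_integral_cong_AE) auto
  also have "\<dots> = ennreal (measure_pmf.expectation (bind_pmf M N) g)" using e1 e2 by simp
  finally have "integrable M (\<lambda>x. measure_pmf.expectation (N x) g) \<and>
     measure_pmf.expectation M (\<lambda>x. measure_pmf.expectation (N x) g) = measure_pmf.expectation (bind_pmf M N) g"
    using nn by (subst nn_integral_eq_integrable[symmetric]) (auto intro!: integral_nonneg_AE)
  then show "integrable M (\<lambda>x. measure_pmf.expectation (N x) g)"
    "measure_pmf.expectation (bind_pmf M N) g = measure_pmf.expectation M (\<lambda>x. measure_pmf.expectation (N x) g)"
    by auto
qed

lemma pmf_integral_bind:
  fixes f :: "'b \<Rightarrow> real"
  assumes int: "integrable (bind_pmf M N) f"
  shows "integrable M (\<lambda>x. measure_pmf.expectation (N x) f)"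
    and "measure_pmf.expectation (bind_pmf M N) f = measure_pmf.expectation M (\<lambda>x. measure_pmf.expectation (N x) f)"
proof -
  define fp where "fp y = max (f y) 0" for y
  define fm where "fm y = max (- f y) 0" for y
  have ip: "integrable (bind_pmf M N) fp" unfolding fp_def using int by auto
  have im: "integrable (bind_pmf M N) fm" unfolding fm_def using int by auto
  have f_eq: "f = (\<lambda>y. fp y - fm y)" by (auto simp: fp_def fm_def fun_eq_iff)
  note P = pmf_integral_bind_nonneg[OF ip, of, unfolded fp_def, folded fp_def]
  have Pp: "integrable M (\<lambda>x. measure_pmf.expectation (N x) fp)"
     "measure_pmf.expectation (bind_pmf M N) fp = measure_pmf.expectation M (\<lambda>x. measure_pmf.expectation (N x) fp)"
     "AE x in M. integrable (N x) fp"
    using pmf_integral_bind_nonneg[OF ip] by (auto simp: fp_def)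
  have Pm: "integrable M (\<lambda>x. measure_pmf.expectation (N x) fm)"
     "measure_pmf.expectation (bind_pmf M N) fm = measure_pmf.expectation M (\<lambda>x. measure_pmf.expectation (N x) fm)"
     "AE x in M. integrable (N x) fm"
    using pmf_integral_bind_nonneg[OF im] by (auto simp: fm_def)
  have ae: "AE x in M. measure_pmf.expectation (N x) f = measure_pmf.expectation (N x) fp - measure_pmf.expectation (N x) fm"
    using Pp(3) Pm(3) by eventually_elim (simp add: f_eq)
  show "integrable M (\<lambda>x. measure_pmf.expectation (N x) f)"
  proof (subst integrable_cong_AE[OF _ _ ae])
    show "integrable M (\<lambda>x. measure_pmf.expectation (N x) fp - measure_pmf.expectation (N x) fm)"
      using Pp(1) Pm(1) by auto
  qed auto
  have "measure_pmf.expectation M (\<lambda>x. measure_pmf.expectation (N x) f)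
      = measure_pmf.expectation M (\<lambda>x. measure_pmf.expectation (N x) fp - measure_pmf.expectation (N x) fm)"
    using ae by (intro integral_cong_AE) auto
  also have "\<dots> = measure_pmf.expectation (bind_pmf M N) fp - measure_pmf.expectation (bind_pmf M N) fm"
    using Pp Pm by (simp add: integral_diff)
  also have "\<dots> = measure_pmf.expectation (bind_pmf M N) f"
    using ip im by (simp add: f_eq integral_diff)
  finally show "measure_pmf.expectation (bind_pmf M N) f = measure_pmf.expectation M (\<lambda>x. measure_pmf.expectation (N x) f)" ..
qed

definition PL :: "'a set \<Rightarrow> real \<Rightarrow> ('a \<Rightarrow> nat) pmf" where
  "PL A l = Pi_pmf A 0 (\<lambda>_. poisson_dist l)"

definition EP :: "'a set \<Rightarrow> real \<Rightarrow> (('a \<Rightarrow> nat) \<Rightarrow> real) \<Rightarrow> real" where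
  "EP A l F = measure_pmf.expectation (PL A l) F"

definition lin :: "'a set \<Rightarrow> real \<Rightarrow> (('a \<Rightarrow> nat) \<Rightarrow> real) \<Rightarrow> bool" where
  "lin A K F \<longleftrightarrow> (\<forall>J. \<bar>F J\<bar> \<le> K * (1 + (\<Sum>a\<in>A. real (J a))))"

lemma poisson_int: "0 \<le> l \<Longrightarrow> integrable (poisson_dist l) real"
  by (rule nat_pmf_integrable) (use sums_summable[OF pp_mean] in \<open>simp add: pmf_poisson_dist\<close>)

lemma poisson_mean: "0 \<le> l \<Longrightarrow> measure_pmf.expectation (poisson_dist l) real = l"
  using nat_pmf_sums[OF poisson_int, of l] pp_mean[of l]
  by (simp add: pmf_poisson_dist sums_unique2)

lemma comp_int:
  assumes "finite A" "a \<in> A" "0 \<le> l"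
  shows "integrable (PL A l) (\<lambda>J. real (J a))" "EP A l (\<lambda>J. real (J a)) = l"
proof -
  have m: "map_pmf (\<lambda>f. f a) (PL A l) = poisson_dist l"
    using assms by (simp add: PL_def Pi_pmf_component)
  have "integrable (map_pmf (\<lambda>f. f a) (PL A l)) real" using m poisson_int assms by simp
  then show "integrable (PL A l) (\<lambda>J. real (J a))" by simp
  have "EP A l (\<lambda>J. real (J a)) = measure_pmf.expectation (map_pmf (\<lambda>f. f a) (PL A l)) real"
    by (simp add: EP_def)
  then show "EP A l (\<lambda>J. real (J a)) = l" using m poisson_mean assms by simp
qed

lemma sum_int:
  assumes "finite A" "0 \<le> l"
  shows "integrable (PL A l) (\<lambda>J. \<Sum>a\<in>A. real (J a))" "EP A l (\<lambda>J. \<Sum>a\<in>A. real (J a)) = real (card A) * l"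
proof -
  show "integrable (PL A l) (\<lambda>J. \<Sum>a\<in>A. real (J a))"
    using comp_int[OF assms(1) _ assms(2)] by (intro Bochner_Integration.integrable_sum) auto
  have "EP A l (\<lambda>J. \<Sum>a\<in>A. real (J a)) = (\<Sum>a\<in>A. EP A l (\<lambda>J. real (J a)))"
    unfolding EP_def using comp_int[OF assms(1) _ assms(2)] by (intro Bochner_Integration.integral_sum) (auto simp: EP_def)
  also have "\<dots> = real (card A) * l" using comp_int[OF assms(1) _ assms(2)] by simp
  finally show "EP A l (\<lambda>J. \<Sum>a\<in>A. real (J a)) = real (card A) * l" .
qed

lemma lin_int:
  assumes "finite A" "0 \<le> l" "lin A K F"
  shows "integrable (PL A l) F"
proof (rule Bochner_Integration.integrable_bound)
  show "integrable (PL A l) (\<lambda>J. K * (1 + (\<Sum>a\<in>A. real (J a))))"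
    using sum_int[OF assms(1,2)] by auto
  show "AE x in PL A l. norm (F x) \<le> norm (K * (1 + (\<Sum>a\<in>A. real (x a))))"
  proof (intro AE_I2)
    fix x
    have "\<bar>F x\<bar> \<le> K * (1 + (\<Sum>a\<in>A. real (x a)))" using assms(3) by (auto simp: lin_def)
    also have "\<dots> \<le> \<bar>K * (1 + (\<Sum>a\<in>A. real (x a)))\<bar>" by simp
    finally show "norm (F x) \<le> norm (K * (1 + (\<Sum>a\<in>A. real (x a))))" by simp
  qed
qed simp

lemma lin_bound:
  assumes "finite A" "0 \<le> l" "lin A K F"
  shows "\<bar>EP A l F\<bar> \<le> K * (1 + real (card A) * l)"
proof -
  have "\<bar>EP A l F\<bar> \<le> measure_pmf.expectation (PL A l) (\<lambda>J. norm (F J))"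
    unfolding EP_def using integral_norm_bound[of "PL A l" F] by simp
  also have "\<dots> \<le> measure_pmf.expectation (PL A l) (\<lambda>J. K * (1 + (\<Sum>a\<in>A. real (J a))))"
    using assms lin_int[OF assms] sum_int[OF assms(1,2)] by (intro integral_mono) (auto simp: lin_def)
  also have "\<dots> = K * (1 + real (card A) * l)"
    using sum_int[OF assms(1,2)] by (simp add: EP_def)
  finally show ?thesis .
qed

lemma lin_K_nonneg: "lin A K F \<Longrightarrow> finite A \<Longrightarrow> 0 \<le> K"
proof -
  assume "lin A K F" "finite A"
  then have "\<bar>F (\<lambda>_. 0)\<bar> \<le> K * (1 + (\<Sum>a\<in>A. real 0))" unfolding lin_def by blast
  then show "0 \<le> K" by simp
qed

lemma PL_insert:
  assumes "finite A" "a \<notin> A"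
  shows "PL (insert a A) l = poisson_dist l \<bind> (\<lambda>y. map_pmf (\<lambda>f. f(a := y)) (PL A l))"
  using assms unfolding PL_def by (simp add: Pi_pmf_insert' map_pmf_def)

lemma EP_insert:
  assumes "finite A" "a \<notin> A" "0 \<le> l" "integrable (PL (insert a A) l) F"
  shows "(\<lambda>y. pp l y * EP A l (\<lambda>f. F (f(a:=y)))) sums EP (insert a A) l F"
proof -
  note i = assms(4)[unfolded PL_insert[OF assms(1,2)]]
  have "integrable (poisson_dist l) (\<lambda>y. measure_pmf.expectation (map_pmf (\<lambda>f. f(a := y)) (PL A l)) F)"
    by (rule pmf_integral_bind(1)[OF i])
  then have "(\<lambda>y. pmf (poisson_dist l) y * measure_pmf.expectation (map_pmf (\<lambda>f. f(a := y)) (PL A l)) F)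
     sums measure_pmf.expectation (poisson_dist l) (\<lambda>y. measure_pmf.expectation (map_pmf (\<lambda>f. f(a := y)) (PL A l)) F)"
    by (rule nat_pmf_sums)
  also have "measure_pmf.expectation (poisson_dist l) (\<lambda>y. measure_pmf.expectation (map_pmf (\<lambda>f. f(a := y)) (PL A l)) F)
     = EP (insert a A) l F"
    unfolding EP_def PL_insert[OF assms(1,2)] by (rule pmf_integral_bind(2)[OF i, symmetric])
  finally show ?thesis using assms(3) by (simp add: pmf_poisson_dist EP_def fun_upd_def)
qed

definition ppd :: "real \<Rightarrow> nat \<Rightarrow> real" where
  "ppd l y = (if y = 0 then 0 else pp l (y - 1)) - pp l y"

lemma pp_deriv: "((\<lambda>l. pp l y) has_field_derivative ppd l y) (at l within S)"
proof -
  have "((\<lambda>l. l ^ y / fact y * exp (- l)) has_field_derivative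
        (real y * l ^ (y - 1) / fact y * exp (- l) - l ^ y / fact y * exp (- l))) (at l within S)"
    by (auto intro!: derivative_eq_intros simp: field_simps)
  moreover have "real y * l ^ (y - 1) / fact y * exp (- l) - l ^ y / fact y * exp (- l) = ppd l y"
  proof (cases y)
    case 0 then show ?thesis by (simp add: ppd_def pp_def)
  next
    case (Suc m)
    have "real (Suc m) * l ^ m / fact (Suc m) = real (Suc m) * l ^ m / (real (Suc m) * fact m)"
      by (simp only: fact_Suc)
    also have "\<dots> = l ^ m / fact m"
      by (rule mult_divide_mult_cancel_left) simp
    finally have "real (Suc m) * l ^ m / fact (Suc m) = l ^ m / fact m" .
    then show ?thesis using Suc by (simp add: ppd_def pp_def)
  qed
  ultimately show ?thesis unfolding pp_def by simp
qed

lemma pp_le: "x \<in> {0..L} \<Longrightarrow> pp x y \<le> L ^ y / fact y"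
proof -
  assume x: "x \<in> {0..L}"
  have "x ^ y \<le> L ^ y" using x by (intro power_mono) auto
  moreover have "exp (- x) \<le> 1" using x by simp
  ultimately have "x ^ y * exp (- x) \<le> L ^ y * 1"
    using x by (intro mult_mono) auto
  then show ?thesis by (simp add: pp_def divide_right_mono)
qed

lemma sum_u: "0 \<le> L \<Longrightarrow> summable (\<lambda>y. (1 + real y) * (L ^ y / fact y))"
proof -
  assume L: "0 \<le> L"
  have "summable (\<lambda>k. pp L k * (1 + real k) * exp L)"
    by (intro summable_mult2 pp_summable_lin L)
  moreover have "\<And>k. pp L k * (1 + real k) * exp L = (1 + real k) * (L ^ k / fact k)"
    by (simp add: pp_def exp_minus field_simps)
  ultimately show ?thesis by simp
qed

lemma sum_v: "0 \<le> L \<Longrightarrow> summable (\<lambda>y. (1 + real y) * (if y = 0 then 0 else L ^ (y - 1) / fact (y - 1)))"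
proof -
  assume L: "0 \<le> L"
  have "summable (\<lambda>m. (1 + real (Suc m)) * (L ^ m / fact m))"
  proof (rule summable_comparison_test'[OF summable_mult[OF sum_u[OF L], of 2]])
    fix m :: nat
    have "0 \<le> L ^ m / fact m" using L by simp
    then show "norm ((1 + real (Suc m)) * (L ^ m / fact m)) \<le> 2 * ((1 + real m) * (L ^ m / fact m))"
      by (simp add: abs_mult mult_right_mono field_simps)
  qed
  then show ?thesis by (subst summable_Suc_iff[symmetric]) simp
qed

lemma L1:
  fixes H H' :: "real \<Rightarrow> nat \<Rightarrow> real" and L K :: real
  assumes L: "0 \<le> L"
  and dH: "\<And>y l. l \<in> {0..L} \<Longrightarrow> ((\<lambda>l. H l y) has_field_derivative H' l y) (at l within {0..L})"
  and bH: "\<And>y l. l \<in> {0..L} \<Longrightarrow> \<bar>H l y\<bar> \<le> K * (1 + real y)"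
  and bH': "\<And>y l. l \<in> {0..L} \<Longrightarrow> \<bar>H' l y\<bar> \<le> K * (1 + real y)"
  and l: "l \<in> {0..L}"
  shows "((\<lambda>l. \<Sum>y. pp l y * H l y) has_field_derivative
           (\<Sum>y. pp l y * (H l (Suc y) - H l y + H' l y))) (at l within {0..L})"
proof -
  have K: "0 \<le> K" using bH[OF l, of 0] by simp
  define f where "f y x = pp x y * H x y" for y x
  define f' where "f' y x = ppd x y * H x y + pp x y * H' x y" for y x
  define M where "M y = K * (2 * ((1 + real y) * (L ^ y / fact y)) +
      (1 + real y) * (if y = 0 then 0 else L ^ (y - 1) / fact (y - 1)))" for y
  have sM: "summable M" unfolding M_def
    by (intro summable_mult summable_add sum_u sum_v L)
  have pp_abs: "\<bar>pp x y\<bar> \<le> L ^ y / fact y" if "x \<in> {0..L}" for x y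
    using pp_le[OF that] pp_nonneg[of x y] that by auto
  have ppd_abs: "\<bar>ppd x y\<bar> \<le> L ^ y / fact y + (if y = 0 then 0 else L ^ (y - 1) / fact (y - 1))"
    if "x \<in> {0..L}" for x y
    using pp_abs[OF that, of y] pp_abs[OF that, of "y - 1"] by (auto simp: ppd_def)
  have bf': "norm (f' y x) \<le> M y" if x: "x \<in> {0..L}" for y x
  proof -
    have "\<bar>f' y x\<bar> \<le> \<bar>ppd x y\<bar> * \<bar>H x y\<bar> + \<bar>pp x y\<bar> * \<bar>H' x y\<bar>"
      unfolding f'_def by (metis abs_mult abs_triangle_ineq)
    also have "\<dots> \<le> (L ^ y / fact y + (if y = 0 then 0 else L ^ (y - 1) / fact (y - 1))) * (K * (1 + real y))
                 + (L ^ y / fact y) * (K * (1 + real y))"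
      by (intro add_mono mult_mono ppd_abs pp_abs bH bH' x) (use L in auto)
    also have "\<dots> = M y" by (simp add: M_def algebra_simps)
    finally show ?thesis by simp
  qed
  have unif: "uniform_limit {0..L} (\<lambda>n x. \<Sum>i<n. f' i x) (\<lambda>x. \<Sum>i. f' i x) sequentially"
    by (rule Weierstrass_m_test[OF bf' sM])
  have df: "(f y has_field_derivative f' y x) (at x within {0..L})" if "x \<in> {0..L}" for y x
    unfolding f_def f'_def
    by (rule derivative_eq_intros pp_deriv dH that | simp)+
  have sf: "summable (\<lambda>y. f y l)"
  proof (rule summable_comparison_test'[OF summable_mult[OF sum_u[OF L], of K]])
    fix y :: nat
    have "\<bar>f y l\<bar> \<le> (L ^ y / fact y) * (K * (1 + real y))"
      unfolding f_def abs_mult using L by (intro mult_mono pp_abs bH l) auto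
    then show "norm (f y l) \<le> K * ((1 + real y) * (L ^ y / fact y))" by (simp add: algebra_simps)
  qed
  obtain g where g: "\<forall>x\<in>{0..L}. (\<lambda>n. f n x) sums g x \<and> (g has_field_derivative (\<Sum>i. f' i x)) (at x within {0..L})"
    using has_field_derivative_series[OF convex_real_interval(5) df unif l sf] by blast
  have d1: "((\<lambda>x. \<Sum>y. f y x) has_field_derivative (\<Sum>i. f' i l)) (at l within {0..L})"
    by (rule has_field_derivative_transform_within[OF conjunct2[OF g[rule_format, OF l]], of 1])
       (use l g in \<open>auto simp: sums_iff\<close>)
  have sA: "summable (\<lambda>z. pp l z * H l (Suc z))"
  proof (rule summable_comparison_test'[OF summable_mult[OF sum_u[OF L], of "2 * K"]])
    fix y :: nat
    have "\<bar>pp l y * H l (Suc y)\<bar> \<le> (L ^ y / fact y) * (K * (1 + real (Suc y)))"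
      unfolding abs_mult using L by (intro mult_mono pp_abs bH l) auto
    also have "\<dots> \<le> 2 * K * ((1 + real y) * (L ^ y / fact y))"
    proof -
      have t: "0 \<le> K * (L ^ y / fact y)" using K L by simp
      have "(K * (L ^ y / fact y)) * (2 + real y) \<le> (K * (L ^ y / fact y)) * (2 + 2 * real y)"
        by (rule mult_left_mono[OF _ t]) simp
      then show ?thesis by (simp add: field_simps)
    qed
    finally show "norm (pp l y * H l (Suc y)) \<le> 2 * K * ((1 + real y) * (L ^ y / fact y))" by simp
  qed
  have sB: "summable (\<lambda>y. pp l y * (H' l y - H l y))"
  proof (rule summable_comparison_test'[OF summable_mult[OF sum_u[OF L], of "2 * K"]])
    fix y :: nat
    have "\<bar>pp l y * (H' l y - H l y)\<bar> \<le> (L ^ y / fact y) * (K * (1 + real y) + K * (1 + real y))"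
      unfolding abs_mult using L K
      by (intro mult_mono pp_abs l order.trans[OF abs_triangle_ineq4] add_mono bH bH') auto
    also have "(L ^ y / fact y) * (K * (1 + real y) + K * (1 + real y)) = 2 * K * ((1 + real y) * (L ^ y / fact y))"
      by (simp add: algebra_simps add_divide_distrib)
    finally show "norm (pp l y * (H' l y - H l y)) \<le> 2 * K * ((1 + real y) * (L ^ y / fact y))"
      by simp
  qed
  have A: "(\<lambda>y. if y = 0 then 0 else pp l (y - 1) * H l y) sums (\<Sum>z. pp l z * H l (Suc z))"
  proof -
    have "(\<lambda>z. (\<lambda>y. if y = 0 then 0 else pp l (y - 1) * H l y) (Suc z)) sums (\<Sum>z. pp l z * H l (Suc z))"
      using summable_sums[OF sA] by simp
    then show ?thesis by (subst (asm) sums_Suc_iff) simp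
  qed
  have "(\<lambda>y. f' y l) sums ((\<Sum>z. pp l z * H l (Suc z)) + (\<Sum>y. pp l y * (H' l y - H l y)))"
  proof -
    have "(\<lambda>y. (if y = 0 then 0 else pp l (y - 1) * H l y) + pp l y * (H' l y - H l y)) sums
        ((\<Sum>z. pp l z * H l (Suc z)) + (\<Sum>y. pp l y * (H' l y - H l y)))"
      by (intro sums_add A summable_sums sB)
    moreover have "\<And>y. (if y = 0 then 0 else pp l (y - 1) * H l y) + pp l y * (H' l y - H l y) = f' y l"
      by (simp add: f'_def ppd_def algebra_simps)
    ultimately show ?thesis by simp
  qed
  also have "(\<Sum>z. pp l z * H l (Suc z)) + (\<Sum>y. pp l y * (H' l y - H l y))
      = (\<Sum>y. pp l y * (H l (Suc y) - H l y + H' l y))"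
    by (subst suminf_add[OF sA sB]) (simp add: algebra_simps)
  finally have "(\<Sum>i. f' i l) = (\<Sum>y. pp l y * (H l (Suc y) - H l y + H' l y))"
    by (simp add: sums_iff)
  with d1 show ?thesis by (simp add: f_def)
qed

lemma sum_upd_out: "a \<notin> A \<Longrightarrow> (\<Sum>b\<in>A. real ((f(a:=y)) b)) = (\<Sum>b\<in>A. real (f b))"
  by (rule sum.cong) auto

lemma sum_upd_in:
  assumes "finite A" "b \<in> A"
  shows "(\<Sum>c\<in>A. real ((J(b:=v)) c)) = (\<Sum>c\<in>A. real (J c)) - real (J b) + real v"
proof -
  have "(\<Sum>c\<in>A. real ((J(b:=v)) c)) = real v + (\<Sum>c\<in>A - {b}. real ((J(b:=v)) c))"
    using assms by (subst sum.remove[of _ b]) auto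
  also have "(\<Sum>c\<in>A - {b}. real ((J(b:=v)) c)) = (\<Sum>c\<in>A - {b}. real (J c))"
    by (rule sum.cong) auto
  also have "\<dots> = (\<Sum>c\<in>A. real (J c)) - real (J b)"
    using assms by (subst sum.remove[of _ b]) auto
  finally show ?thesis by simp
qed

lemma EP_diff:
  assumes "finite A" "0 \<le> l" "lin A K1 F1" "lin A K2 F2"
  shows "EP A l (\<lambda>J. F1 J - F2 J) = EP A l F1 - EP A l F2"
  unfolding EP_def using lin_int[OF assms(1,2,3)] lin_int[OF assms(1,2,4)]
  by (rule Bochner_Integration.integral_diff)

lemma lin_D:
  assumes "finite A" "b \<in> A" "lin A K F"
  shows "lin A (3 * K) (\<lambda>J. F (J(b := Suc (J b))) - F J)"
  unfolding lin_def
proof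
  fix J
  have K: "0 \<le> K" using lin_K_nonneg assms(1,3) by blast
  let ?S = "(\<Sum>a\<in>A. real (J a))"
  have S: "0 \<le> ?S" by (simp add: sum_nonneg)
  have "\<bar>F (J(b := Suc (J b)))\<bar> \<le> K * (1 + (\<Sum>c\<in>A. real ((J(b := Suc (J b))) c)))"
    using assms(3) unfolding lin_def by blast
  also have "(\<Sum>c\<in>A. real ((J(b := Suc (J b))) c)) = ?S + 1"
    using sum_upd_in[OF assms(1,2)] by simp
  finally have 1: "\<bar>F (J(b := Suc (J b)))\<bar> \<le> K * (1 + (?S + 1))" .
  have "K * (1 + (?S + 1)) = K * (2 + ?S)" by simp
  with 1 have 1: "\<bar>F (J(b := Suc (J b)))\<bar> \<le> K * (2 + ?S)" by linarith
  have 2: "\<bar>F J\<bar> \<le> K * (1 + ?S)" using assms(3) unfolding lin_def by blast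
  have "\<bar>F (J(b := Suc (J b))) - F J\<bar> \<le> K * (2 + ?S) + K * (1 + ?S)"
    using 1 2 by linarith
  also have "\<dots> \<le> 3 * K * (1 + ?S)"
    using K S by (simp add: algebra_simps mult_left_mono)
  finally show "\<bar>F (J(b := Suc (J b))) - F J\<bar> \<le> 3 * K * (1 + ?S)" .
qed

theorem D:
  assumes "finite A"
  shows "\<forall>(F :: ('a \<Rightarrow> nat) \<Rightarrow> real) K (L::real) (l::real). lin A K F \<longrightarrow> 0 \<le> L \<longrightarrow> l \<in> {0..L} \<longrightarrow>
    ((\<lambda>l. EP A l F) has_field_derivative
       (\<Sum>b\<in>A. EP A l (\<lambda>J. F (J(b := Suc (J b))) - F J))) (at l within {0..L})"
  using assms
proof (induction A rule: finite_induct)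
  case empty
  have "(\<lambda>l. EP {} l F) = (\<lambda>l. F (\<lambda>_. 0))" for F :: "('a \<Rightarrow> nat) \<Rightarrow> real"
    by (simp add: EP_def PL_def)
  then show ?case by simp
next
  case (insert a A)
  show ?case
  proof (intro allI impI)
    fix F :: "('a \<Rightarrow> nat) \<Rightarrow> real" and K L l :: real
    assume linF: "lin (insert a A) K F" and L: "0 \<le> L" and l: "l \<in> {0..L}"
    have K: "0 \<le> K" using lin_K_nonneg linF insert by blast
    define n where "n = real (card A)"
    have n: "0 \<le> n" by (simp add: n_def)
    define G where "G y f = F (f(a := y))" for y f
    define D where "D y b J = G y (J(b := Suc (J b))) - G y J" for y b J
    have D_eq: "D y b = (\<lambda>J. G y (J(b := Suc (J b))) - G y J)" for y b
      by (simp add: D_def fun_eq_iff)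
    define H where "H l y = EP A l (G y)" for l y
    define H' where "H' l y = (\<Sum>b\<in>A. EP A l (D y b))" for l y
    define K2 where "K2 = 3 * K * (1 + n * L) * (1 + n)"
    have linG: "lin A (K * (1 + real y)) (G y)" for y
      unfolding lin_def
    proof
      fix f :: "'a \<Rightarrow> nat"
      let ?S = "(\<Sum>b\<in>A. real (f b))"
      have S: "0 \<le> ?S" by (simp add: sum_nonneg)
      have "\<bar>G y f\<bar> \<le> K * (1 + (\<Sum>b\<in>insert a A. real ((f(a:=y)) b)))"
        using linF unfolding lin_def G_def by blast
      also have "(\<Sum>b\<in>insert a A. real ((f(a:=y)) b)) = real y + ?S"
        using insert(1,2) sum_upd_out[OF insert(2), of f y] by simp
      also have "K * (1 + (real y + ?S)) \<le> K * (1 + real y) * (1 + ?S)"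
      proof -
        have "1 + (real y + ?S) \<le> (1 + real y) * (1 + ?S)" using S by (simp add: algebra_simps)
        then have "K * (1 + (real y + ?S)) \<le> K * ((1 + real y) * (1 + ?S))" by (rule mult_left_mono) (rule K)
        then show ?thesis by (simp add: mult.assoc)
      qed
      finally show "\<bar>G y f\<bar> \<le> K * (1 + real y) * (1 + ?S)" .
    qed
    have linD: "lin A (3 * (K * (1 + real y))) (D y b)" if "b \<in> A" for y b
      unfolding D_def by (rule lin_D[OF insert(1) that linG])
    have dH: "((\<lambda>l. H l y) has_field_derivative H' l' y) (at l' within {0..L})"
      if "l' \<in> {0..L}" for y l'
      using insert(3)[rule_format, OF linG L that] by (simp add: H_def H'_def D_eq)
    have bH: "\<bar>H l' y\<bar> \<le> K2 * (1 + real y)" if "l' \<in> {0..L}" for y l'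
    proof -
      have "\<bar>H l' y\<bar> \<le> K * (1 + real y) * (1 + n * l')"
        unfolding H_def n_def using lin_bound[OF insert(1) _ linG] that by auto
      also have "\<dots> \<le> K * (1 + real y) * (1 + n * L)"
        using that K n by (intro mult_left_mono) (auto intro: mult_left_mono)
      also have "\<dots> \<le> K2 * (1 + real y)"
        unfolding K2_def using K n L
        by (simp add: algebra_simps mult_left_mono mult_nonneg_nonneg)
      finally show ?thesis .
    qed
    have bH': "\<bar>H' l' y\<bar> \<le> K2 * (1 + real y)" if "l' \<in> {0..L}" for y l'
    proof -
      have "\<bar>H' l' y\<bar> \<le> (\<Sum>b\<in>A. \<bar>EP A l' (D y b)\<bar>)"
        unfolding H'_def by (rule sum_abs)
      also have "\<dots> \<le> (\<Sum>b\<in>A. 3 * (K * (1 + real y)) * (1 + n * L))"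
      proof (rule sum_mono)
        fix b assume b: "b \<in> A"
        have "\<bar>EP A l' (D y b)\<bar> \<le> 3 * (K * (1 + real y)) * (1 + n * l')"
          unfolding n_def using lin_bound[OF insert(1) _ linD[OF b]] that by auto
        also have "\<dots> \<le> 3 * (K * (1 + real y)) * (1 + n * L)"
          using that K n by (intro mult_left_mono) (auto intro: mult_left_mono)
        finally show "\<bar>EP A l' (D y b)\<bar> \<le> 3 * (K * (1 + real y)) * (1 + n * L)" .
      qed
      also have "\<dots> = n * (3 * (K * (1 + real y)) * (1 + n * L))" by (simp add: n_def)
      also have "\<dots> \<le> K2 * (1 + real y)"
        unfolding K2_def using K n L
        by (simp add: algebra_simps mult_left_mono mult_nonneg_nonneg)
      finally show ?thesis .
    qed
    have d1: "((\<lambda>l. \<Sum>y. pp l y * H l y) has_field_derivative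
           (\<Sum>y. pp l y * (H l (Suc y) - H l y + H' l y))) (at l within {0..L})"
      by (rule L1[OF L dH bH bH' l])
    have eqE: "EP (insert a A) l' F = (\<Sum>y. pp l' y * H l' y)" if "l' \<in> {0..L}" for l'
    proof -
      have "(\<lambda>y. pp l' y * H l' y) sums EP (insert a A) l' F"
        unfolding H_def G_def using that insert(1,2)
        by (intro EP_insert lin_int[OF _ _ linF]) auto
      then show ?thesis by (simp add: sums_iff)
    qed
    have d2: "((\<lambda>l. EP (insert a A) l F) has_field_derivative
           (\<Sum>y. pp l y * (H l (Suc y) - H l y + H' l y))) (at l within {0..L})"
      by (rule has_field_derivative_transform_within[OF d1 zero_less_one l]) (use eqE in auto)
    define DF where "DF b J = F (J(b := Suc (J b))) - F J" for b J
    have DF_eq: "DF b = (\<lambda>J. F (J(b := Suc (J b))) - F J)" for b by (simp add: DF_def fun_eq_iff)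
    have sB: "(\<lambda>y. pp l y * EP A l (\<lambda>f. DF b (f(a:=y)))) sums EP (insert a A) l (DF b)"
      if "b \<in> insert a A" for b
      unfolding DF_def using that l insert(1,2)
      by (intro EP_insert lin_int[OF _ _ lin_D[OF _ that linF]]) auto
    have "(\<lambda>y. \<Sum>b\<in>insert a A. pp l y * EP A l (\<lambda>f. DF b (f(a:=y)))) sums
        (\<Sum>b\<in>insert a A. EP (insert a A) l (DF b))"
      by (rule sums_sum) (use sB in auto)
    moreover have "(\<Sum>b\<in>insert a A. pp l y * EP A l (\<lambda>f. DF b (f(a:=y)))) =
        pp l y * (H l (Suc y) - H l y + H' l y)" for y
    proof -
      have l0: "0 \<le> l" using l by auto
      have "EP A l (\<lambda>f. DF a (f(a:=y))) = EP A l (\<lambda>f. G (Suc y) f - G y f)"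
        unfolding DF_def G_def by (rule arg_cong[where f="EP A l"]) (simp add: fun_eq_iff)
      also have "\<dots> = H l (Suc y) - H l y"
        unfolding H_def by (rule EP_diff[OF insert(1) l0 linG linG])
      finally have A1: "EP A l (\<lambda>f. DF a (f(a:=y))) = H l (Suc y) - H l y" .
      have A2: "EP A l (\<lambda>f. DF b (f(a:=y))) = EP A l (D y b)" if "b \<in> A" for b
      proof -
        have "b \<noteq> a" using that insert by auto
        then have "\<And>f. (f(a := y))(b := Suc ((f(a := y)) b)) = (f(b := Suc (f b)))(a := y)"
          by (auto simp: fun_eq_iff)
        then show ?thesis unfolding DF_def D_def G_def by simp
      qed
      have "(\<Sum>b\<in>insert a A. pp l y * EP A l (\<lambda>f. DF b (f(a:=y)))) =
         pp l y * (H l (Suc y) - H l y) + (\<Sum>b\<in>A. pp l y * EP A l (D y b))"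
        using insert A1 A2 by simp
      also have "\<dots> = pp l y * (H l (Suc y) - H l y + H' l y)"
        by (simp add: H'_def sum_distrib_left algebra_simps)
      finally show ?thesis .
    qed
    ultimately have "(\<lambda>y. pp l y * (H l (Suc y) - H l y + H' l y)) sums
        (\<Sum>b\<in>insert a A. EP (insert a A) l (DF b))" by simp
    then have "(\<Sum>y. pp l y * (H l (Suc y) - H l y + H' l y)) = (\<Sum>b\<in>insert a A. EP (insert a A) l (DF b))"
      by (simp add: sums_iff)
    with d2 show "((\<lambda>l. EP (insert a A) l F) has_field_derivative
       (\<Sum>b\<in>insert a A. EP (insert a A) l (\<lambda>J. F (J(b := Suc (J b))) - F J))) (at l within {0..L})"
      by (simp add: DF_eq)
  qed
qed

definition aa :: "nat \<Rightarrow> nat \<Rightarrow> (nat \<times> nat \<Rightarrow> real) \<Rightarrow> nat \<Rightarrow> nat \<Rightarrow> real" where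
  "aa q N M i j = (\<Sum>\<sigma>\<in>configs q N. gibbs q N M \<sigma> * kdelta (\<sigma> i) (\<sigma> j))"

lemma configs_finite: "finite (configs q N)"
  unfolding configs_def by (intro finite_PiE) auto

lemma card_configs: "card (configs q N) = q ^ N"
  unfolding configs_def by (simp add: card_PiE)

lemma configs_ne: "1 \<le> q \<Longrightarrow> configs q N \<noteq> {}"
  using card_configs[of q N] by (metis card.empty power_eq_0_iff not_one_le_zero)

lemma Z_pos: "1 \<le> q \<Longrightarrow> 0 < partition_fn q N M"
  unfolding partition_fn_def using configs_ne configs_finite
  by (intro sum_pos) auto

lemma gibbs_nonneg: "1 \<le> q \<Longrightarrow> 0 \<le> gibbs q N M \<sigma>"
  unfolding gibbs_def using Z_pos[of q N M] by simp

lemma gibbs_sum: "1 \<le> q \<Longrightarrow> (\<Sum>\<sigma>\<in>configs q N. gibbs q N M \<sigma>) = 1"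
  unfolding gibbs_def using Z_pos[of q N M]
  by (simp add: sum_divide_distrib[symmetric] partition_fn_def)

lemma kdelta_01: "0 \<le> kdelta a b" "kdelta a b \<le> 1"
  by (auto simp: kdelta_def)

lemma aa_bounds: "1 \<le> q \<Longrightarrow> 0 \<le> aa q N M i j \<and> aa q N M i j \<le> 1"
proof
  assume q: "1 \<le> q"
  show "0 \<le> aa q N M i j" unfolding aa_def
    using gibbs_nonneg[OF q] kdelta_01 by (intro sum_nonneg mult_nonneg_nonneg) auto
  have "aa q N M i j \<le> (\<Sum>\<sigma>\<in>configs q N. gibbs q N M \<sigma>)" unfolding aa_def
    using gibbs_nonneg[OF q] kdelta_01 by (intro sum_mono) (simp add: mult_left_le)
  then show "aa q N M i j \<le> 1" using gibbs_sum[OF q] by simp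
qed

lemma ham_sum: "hamiltonian N \<sigma> M = (\<Sum>p\<in>{..<N}\<times>{..<N}. M p * kdelta (\<sigma> (fst p)) (\<sigma> (snd p)))"
  unfolding hamiltonian_def by (simp add: sum.cartesian_product case_prod_beta)

lemma sum_upd_real:
  fixes g :: "'a \<Rightarrow> real"
  assumes "finite A" "b \<in> A"
  shows "(\<Sum>c\<in>A. (M(b:=v)) c * g c) = (\<Sum>c\<in>A. M c * g c) + (v - M b) * g b"
proof -
  have "(\<Sum>c\<in>A. (M(b:=v)) c * g c) = v * g b + (\<Sum>c\<in>A - {b}. (M(b:=v)) c * g c)"
    using assms by (subst sum.remove[of _ b]) auto
  also have "(\<Sum>c\<in>A - {b}. (M(b:=v)) c * g c) = (\<Sum>c\<in>A - {b}. M c * g c)"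
    by (rule sum.cong) auto
  also have "\<dots> = (\<Sum>c\<in>A. M c * g c) - M b * g b"
    using assms by (subst sum.remove[of _ b]) auto
  finally show ?thesis by (simp add: algebra_simps)
qed

lemma ham_upd:
  assumes "p0 \<in> {..<N}\<times>{..<N}"
  shows "hamiltonian N \<sigma> (M(p0 := v)) = hamiltonian N \<sigma> M + (v - M p0) * kdelta (\<sigma> (fst p0)) (\<sigma> (snd p0))"
  unfolding ham_sum using sum_upd_real[OF _ assms, of M v "\<lambda>p. kdelta (\<sigma> (fst p)) (\<sigma> (snd p))"]
  by simp

lemma exp_kdelta: "exp (- (\<beta> * kdelta a b)) = 1 - (1 - exp (- \<beta>)) * kdelta a b"
  by (simp add: kdelta_def)

lemma sum_lin_aux:
  fixes e d :: "'a \<Rightarrow> real"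
  shows "(\<Sum>i\<in>S. e i * (1 - x * d i)) = (\<Sum>i\<in>S. e i) - x * (\<Sum>i\<in>S. e i * d i)"
  by (simp add: sum_subtractf sum_distrib_left algebra_simps)

lemma Z_upd:
  assumes q: "1 \<le> q" and p0: "p0 \<in> {..<N}\<times>{..<N}"
  shows "partition_fn q N (M(p0 := M p0 + \<beta>)) =
     partition_fn q N M * (1 - (1 - exp (- \<beta>)) * aa q N M (fst p0) (snd p0))"
proof -
  let ?x = "1 - exp (- \<beta>)"
  let ?Z = "partition_fn q N M"
  let ?d = "\<lambda>\<sigma>::nat\<Rightarrow>nat. kdelta (\<sigma> (fst p0)) (\<sigma> (snd p0))"
  have Z: "?Z \<noteq> 0" using Z_pos[of q N M] q by simp
  have "partition_fn q N (M(p0 := M p0 + \<beta>)) =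
      (\<Sum>\<sigma>\<in>configs q N. exp (- hamiltonian N \<sigma> M) * (1 - ?x * ?d \<sigma>))"
    unfolding partition_fn_def
  proof (rule sum.cong[OF refl])
    fix \<sigma> :: "nat \<Rightarrow> nat"
    have "exp (- hamiltonian N \<sigma> (M(p0 := M p0 + \<beta>))) = exp (- hamiltonian N \<sigma> M) * exp (- (\<beta> * ?d \<sigma>))"
      unfolding ham_upd[OF p0] by (simp add: exp_add[symmetric])
    then show "exp (- hamiltonian N \<sigma> (M(p0 := M p0 + \<beta>))) = exp (- hamiltonian N \<sigma> M) * (1 - ?x * ?d \<sigma>)"
      by (simp only: exp_kdelta)
  qed
  also have "\<dots> = ?Z - ?x * (\<Sum>\<sigma>\<in>configs q N. exp (- hamiltonian N \<sigma> M) * ?d \<sigma>)"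
    unfolding partition_fn_def by (rule sum_lin_aux)
  also have "(\<Sum>\<sigma>\<in>configs q N. exp (- hamiltonian N \<sigma> M) * ?d \<sigma>) = ?Z * aa q N M (fst p0) (snd p0)"
    unfolding aa_def gibbs_def using Z by (simp add: sum_distrib_left)
  finally show ?thesis by (metis (no_types) mult.left_commute right_diff_distrib mult_1_right)
qed

lemma scaled_upd: "scaled \<beta> (J(b := Suc (J b))) = (scaled \<beta> J)(b := scaled \<beta> J b + \<beta>)"
  by (simp add: scaled_def fun_eq_iff algebra_simps)

lemma lnZ_upd:
  assumes q: "1 \<le> q" and p0: "p0 \<in> {..<N}\<times>{..<N}" and \<beta>: "0 \<le> \<beta>"
  shows "ln (partition_fn q N (scaled \<beta> (J(p0 := Suc (J p0))))) - ln (partition_fn q N (scaled \<beta> J)) =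
     ln (1 - (1 - exp (- \<beta>)) * aa q N (scaled \<beta> J) (fst p0) (snd p0))"
proof -
  let ?a = "aa q N (scaled \<beta> J) (fst p0) (snd p0)"
  have a: "0 \<le> ?a" "?a \<le> 1" using aa_bounds[OF q] by auto
  have x: "0 \<le> 1 - exp (- \<beta>)" "1 - exp (- \<beta>) < 1" using \<beta> by auto
  have "(1 - exp (- \<beta>)) * ?a \<le> (1 - exp (- \<beta>))" using mult_left_le[OF a(2) x(1)] .
  then have pos: "0 < 1 - (1 - exp (- \<beta>)) * ?a" using x by linarith
  have Zp: "0 < partition_fn q N (scaled \<beta> J)" using Z_pos[of q] q by simp
  show ?thesis unfolding scaled_upd Z_upd[OF q p0]
    using Zp pos by (simp add: ln_mult)
qed

definition Psi :: "nat \<Rightarrow> nat \<Rightarrow> nat \<Rightarrow> (nat \<Rightarrow> nat) \<Rightarrow> (nat \<times> nat \<Rightarrow> real) \<Rightarrow> real" where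
  "Psi q N R s M = (\<Sum>\<Sigma>\<in>replicas q N R. (emp_measure N R \<Sigma> s - 1 / real q ^ R)^2 *
        (\<Prod>r<R. gibbs q N M (\<Sigma> r)))"

lemma replicas_finite: "finite (replicas q N R)"
  unfolding replicas_def by (intro finite_PiE configs_finite) auto

lemma w_sum: "1 \<le> q \<Longrightarrow> (\<Sum>\<Sigma>\<in>replicas q N R. \<Prod>r<R. gibbs q N M (\<Sigma> r)) = 1"
proof -
  assume q: "1 \<le> q"
  have "(\<Sum>\<Sigma>\<in>replicas q N R. \<Prod>r<R. gibbs q N M (\<Sigma> r)) = (\<Prod>r<R. \<Sum>\<sigma>\<in>configs q N. gibbs q N M \<sigma>)"
    unfolding replicas_def by (rule prod_sum_PiE[symmetric]) (auto simp: configs_finite)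
  also have "\<dots> = 1" using gibbs_sum[OF q] by simp
  finally show ?thesis .
qed

lemma w_nonneg: "1 \<le> q \<Longrightarrow> 0 \<le> (\<Prod>r<R. gibbs q N M (\<Sigma> r))"
  by (intro prod_nonneg gibbs_nonneg) auto

lemma replicas_val: "\<Sigma> \<in> replicas q N R \<Longrightarrow> r < R \<Longrightarrow> i < N \<Longrightarrow> \<Sigma> r i \<in> {1..q}"
  unfolding replicas_def configs_def by (auto simp: PiE_iff)

lemma kdelta_sum1: "v \<in> {1..q} \<Longrightarrow> (\<Sum>t\<in>{1..q}. kdelta v t) = 1"
  unfolding kdelta_def by (simp add: sum.delta)

lemma kdelta_sum2: "u \<in> {1..q} \<Longrightarrow> (\<Sum>t\<in>{1..q}. kdelta u t * kdelta v t) = kdelta u v"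
proof -
  assume u: "u \<in> {1..q}"
  have "\<And>t. kdelta u t * kdelta v t = (if u = t then kdelta u v else 0)" by (auto simp: kdelta_def)
  then show ?thesis using u by (simp add: sum.delta)
qed

lemma card_spins: "card (PiE {..<R} (\<lambda>_. {1..q::nat})) = q ^ R"
  by (simp add: card_PiE)

lemma sum_emp:
  assumes "\<Sigma> \<in> replicas q N R" "1 \<le> N"
  shows "(\<Sum>s\<in>PiE {..<R} (\<lambda>_. {1..q}). emp_measure N R \<Sigma> s) = 1"
proof -
  have inner: "(\<Sum>s\<in>PiE {..<R} (\<lambda>_. {1..q}). \<Prod>r<R. kdelta (\<Sigma> r i) (s r)) = 1" if i: "i < N" for i
  proof -
    have "(\<Sum>s\<in>PiE {..<R} (\<lambda>_. {1..q}). \<Prod>r<R. kdelta (\<Sigma> r i) (s r)) =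
          (\<Prod>r<R. \<Sum>t\<in>{1..q}. kdelta (\<Sigma> r i) t)"
      by (rule prod_sum_PiE[symmetric]) auto
    also have "\<dots> = 1" using replicas_val[OF assms(1) _ i] kdelta_sum1 by simp
    finally show ?thesis .
  qed
  have "(\<Sum>s\<in>PiE {..<R} (\<lambda>_. {1..q}). emp_measure N R \<Sigma> s) =
     (1 / real N) * (\<Sum>i<N. \<Sum>s\<in>PiE {..<R} (\<lambda>_. {1..q}). \<Prod>r<R. kdelta (\<Sigma> r i) (s r))"
    unfolding emp_measure_def sum_distrib_left[symmetric]
    by (rule arg_cong[where f="\<lambda>x. 1 / real N * x"], rule sum.swap)
  also have "\<dots> = 1" using inner assms(2) by simp
  finally show ?thesis .
qed

lemma sum_emp2:
  assumes "\<Sigma> \<in> replicas q N R"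
  shows "(\<Sum>s\<in>PiE {..<R} (\<lambda>_. {1..q}). (emp_measure N R \<Sigma> s)^2) =
     (1 / real N ^ 2) * (\<Sum>p\<in>{..<N}\<times>{..<N}. \<Prod>r<R. kdelta (\<Sigma> r (fst p)) (\<Sigma> r (snd p)))"
proof -
  have inner: "(\<Sum>s\<in>PiE {..<R} (\<lambda>_. {1..q}). (\<Prod>r<R. kdelta (\<Sigma> r i) (s r)) * (\<Prod>r<R. kdelta (\<Sigma> r j) (s r)))
       = (\<Prod>r<R. kdelta (\<Sigma> r i) (\<Sigma> r j))" if i: "i < N" for i j
  proof -
    have "(\<Sum>s\<in>PiE {..<R} (\<lambda>_. {1..q}). (\<Prod>r<R. kdelta (\<Sigma> r i) (s r)) * (\<Prod>r<R. kdelta (\<Sigma> r j) (s r)))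
      = (\<Sum>s\<in>PiE {..<R} (\<lambda>_. {1..q}). \<Prod>r<R. kdelta (\<Sigma> r i) (s r) * kdelta (\<Sigma> r j) (s r))"
      by (simp add: prod.distrib)
    also have "\<dots> = (\<Prod>r<R. \<Sum>t\<in>{1..q}. kdelta (\<Sigma> r i) t * kdelta (\<Sigma> r j) t)"
      by (rule prod_sum_PiE[symmetric]) auto
    also have "\<dots> = (\<Prod>r<R. kdelta (\<Sigma> r i) (\<Sigma> r j))"
      using replicas_val[OF assms(1) _ i] kdelta_sum2 by (intro prod.cong) auto
    finally show ?thesis .
  qed
  have sq: "(emp_measure N R \<Sigma> s)^2 = (1 / real N ^ 2) *
      (\<Sum>i<N. \<Sum>j<N. (\<Prod>r<R. kdelta (\<Sigma> r i) (s r)) * (\<Prod>r<R. kdelta (\<Sigma> r j) (s r)))" for s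
    unfolding emp_measure_def power2_eq_square by (simp add: sum_product)
  have "(\<Sum>s\<in>PiE {..<R} (\<lambda>_. {1..q}). (emp_measure N R \<Sigma> s)^2) =
     (1 / real N ^ 2) * (\<Sum>i<N. \<Sum>j<N. \<Sum>s\<in>PiE {..<R} (\<lambda>_. {1..q}).
        (\<Prod>r<R. kdelta (\<Sigma> r i) (s r)) * (\<Prod>r<R. kdelta (\<Sigma> r j) (s r)))"
  proof -
    let ?F = "\<lambda>i j s. (\<Prod>r<R. kdelta (\<Sigma> r i) (s r)) * (\<Prod>r<R. kdelta (\<Sigma> r j) (s r))"
    have "(\<Sum>s\<in>PiE {..<R} (\<lambda>_. {1..q}). \<Sum>i<N. \<Sum>j<N. ?F i j s) = (\<Sum>i<N. \<Sum>s\<in>PiE {..<R} (\<lambda>_. {1..q}). \<Sum>j<N. ?F i j s)"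
      by (rule sum.swap)
    also have "\<dots> = (\<Sum>i<N. \<Sum>j<N. \<Sum>s\<in>PiE {..<R} (\<lambda>_. {1..q}). ?F i j s)"
      by (rule sum.cong[OF refl], rule sum.swap)
    finally show ?thesis unfolding sq sum_distrib_left[symmetric] by simp
  qed
  also have "\<dots> = (1 / real N ^ 2) * (\<Sum>i<N. \<Sum>j<N. \<Prod>r<R. kdelta (\<Sigma> r i) (\<Sigma> r j))"
    using inner by simp
  also have "\<dots> = (1 / real N ^ 2) * (\<Sum>p\<in>{..<N}\<times>{..<N}. \<Prod>r<R. kdelta (\<Sigma> r (fst p)) (\<Sigma> r (snd p)))"
    by (simp add: sum.cartesian_product case_prod_beta)
  finally show ?thesis .
qed

lemma w_delta:
  "(\<Sum>\<Sigma>\<in>replicas q N R. (\<Prod>r<R. gibbs q N M (\<Sigma> r)) * (\<Prod>r<R. kdelta (\<Sigma> r i) (\<Sigma> r j)))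
     = aa q N M i j ^ R"
proof -
  have "(\<Sum>\<Sigma>\<in>replicas q N R. (\<Prod>r<R. gibbs q N M (\<Sigma> r)) * (\<Prod>r<R. kdelta (\<Sigma> r i) (\<Sigma> r j)))
     = (\<Sum>\<Sigma>\<in>replicas q N R. \<Prod>r<R. gibbs q N M (\<Sigma> r) * kdelta (\<Sigma> r i) (\<Sigma> r j))"
    by (simp add: prod.distrib)
  also have "\<dots> = (\<Prod>r<R. \<Sum>\<sigma>\<in>configs q N. gibbs q N M \<sigma> * kdelta (\<sigma> i) (\<sigma> j))"
    unfolding replicas_def by (rule prod_sum_PiE[symmetric]) (auto simp: configs_finite)
  also have "\<dots> = aa q N M i j ^ R" by (simp add: aa_def)
  finally show ?thesis .
qed

lemma replica_identity:
  assumes q: "1 \<le> q" and N: "1 \<le> N"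
  shows "(\<Sum>s\<in>PiE {..<R} (\<lambda>_. {1..q}). Psi q N R s M) =
     (1 / real N ^ 2) * (\<Sum>p\<in>{..<N}\<times>{..<N}. aa q N M (fst p) (snd p) ^ R) - 1 / real q ^ R"
proof -
  let ?S = "PiE {..<R} (\<lambda>_. {1..q})"
  let ?c = "1 / real q ^ R"
  let ?w = "\<lambda>\<Sigma>. \<Prod>r<R. gibbs q N M (\<Sigma> r)"
  have c2: "?c ^ 2 * real (q ^ R) = ?c" using q by (simp add: power2_eq_square)
  have inner: "(\<Sum>s\<in>?S. (emp_measure N R \<Sigma> s - ?c)^2) =
      (\<Sum>s\<in>?S. (emp_measure N R \<Sigma> s)^2) - ?c" if S: "\<Sigma> \<in> replicas q N R" for \<Sigma>
  proof -
    have "(\<Sum>s\<in>?S. (emp_measure N R \<Sigma> s - ?c)^2) =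
        (\<Sum>s\<in>?S. (emp_measure N R \<Sigma> s)^2) - 2 * ?c * (\<Sum>s\<in>?S. emp_measure N R \<Sigma> s) + ?c^2 * real (card ?S)"
      by (simp add: power2_diff sum_subtractf sum.distrib sum_distrib_left)
    also have "\<dots> = (\<Sum>s\<in>?S. (emp_measure N R \<Sigma> s)^2) - ?c"
      using sum_emp[OF S N] c2 by (simp only: card_spins)
    finally show ?thesis .
  qed
  have "(\<Sum>s\<in>?S. Psi q N R s M) = (\<Sum>\<Sigma>\<in>replicas q N R. \<Sum>s\<in>?S. (emp_measure N R \<Sigma> s - ?c)^2 * ?w \<Sigma>)"
    unfolding Psi_def by (rule sum.swap)
  also have "\<dots> = (\<Sum>\<Sigma>\<in>replicas q N R. (\<Sum>s\<in>?S. (emp_measure N R \<Sigma> s - ?c)^2) * ?w \<Sigma>)"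
    by (simp only: sum_distrib_right)
  also have "\<dots> = (\<Sum>\<Sigma>\<in>replicas q N R. ((\<Sum>s\<in>?S. (emp_measure N R \<Sigma> s)^2) - ?c) * ?w \<Sigma>)"
    using inner by (intro sum.cong) auto
  also have "\<dots> = (\<Sum>\<Sigma>\<in>replicas q N R. (\<Sum>s\<in>?S. (emp_measure N R \<Sigma> s)^2) * ?w \<Sigma>) - ?c * (\<Sum>\<Sigma>\<in>replicas q N R. ?w \<Sigma>)"
    by (simp only: left_diff_distrib sum_subtractf sum_distrib_left)
  also have "(\<Sum>\<Sigma>\<in>replicas q N R. ?w \<Sigma>) = 1" by (rule w_sum[OF q])
  also have "(\<Sum>\<Sigma>\<in>replicas q N R. (\<Sum>s\<in>?S. (emp_measure N R \<Sigma> s)^2) * ?w \<Sigma>) =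
     (\<Sum>\<Sigma>\<in>replicas q N R. ((1 / real N ^ 2) * (\<Sum>p\<in>{..<N}\<times>{..<N}. \<Prod>r<R. kdelta (\<Sigma> r (fst p)) (\<Sigma> r (snd p)))) * ?w \<Sigma>)"
    using sum_emp2 by (intro sum.cong) auto
  also have "\<dots> = (1 / real N ^ 2) * (\<Sum>\<Sigma>\<in>replicas q N R. \<Sum>p\<in>{..<N}\<times>{..<N}. ?w \<Sigma> * (\<Prod>r<R. kdelta (\<Sigma> r (fst p)) (\<Sigma> r (snd p))))"
    by (simp only: sum_distrib_left sum_distrib_right mult.assoc mult.commute mult.left_commute)
  also have "\<dots> = (1 / real N ^ 2) * (\<Sum>p\<in>{..<N}\<times>{..<N}. \<Sum>\<Sigma>\<in>replicas q N R. ?w \<Sigma> * (\<Prod>r<R. kdelta (\<Sigma> r (fst p)) (\<Sigma> r (snd p))))"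
    by (subst sum.swap) (rule refl)
  also have "\<dots> = (1 / real N ^ 2) * (\<Sum>p\<in>{..<N}\<times>{..<N}. aa q N M (fst p) (snd p) ^ R)"
    by (simp only: w_delta)
  finally show ?thesis by simp
qed

lemma E_Nc_EP: "E_Nc N c f = EP ({..<N}\<times>{..<N}) (c / (2 * real N)) f"
  by (simp add: E_Nc_def J_law_def EP_def PL_def)

lemma Dc:
  assumes N: "1 \<le> N" and linF: "lin ({..<N}\<times>{..<N}) K F" and C: "0 \<le> C" and c: "c \<in> {0..C}"
  shows "((\<lambda>c. E_Nc N c F) has_field_derivative
     (\<Sum>b\<in>{..<N}\<times>{..<N}. EP ({..<N}\<times>{..<N}) (c / (2 * real N)) (\<lambda>J. F (J(b := Suc (J b))) - F J))
        * (1 / (2 * real N))) (at c within {0..C})"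
proof -
  let ?A = "{..<N}\<times>{..<N}"
  let ?g = "\<lambda>c. c / (2 * real N)"
  have Np: "0 < real N" using N by simp
  have gc: "?g c \<in> {0..C / (2 * real N)}" using c Np by (auto simp: divide_right_mono)
  have d1: "((\<lambda>l. EP ?A l F) has_field_derivative
       (\<Sum>b\<in>?A. EP ?A (?g c) (\<lambda>J. F (J(b := Suc (J b))) - F J))) (at (?g c) within {0..C / (2 * real N)})"
    using D[of ?A] linF C Np gc by (auto simp: divide_nonneg_pos)
  have sub: "?g ` {0..C} \<subseteq> {0..C / (2 * real N)}" using Np by (auto simp: divide_right_mono)
  have d1': "((\<lambda>l. EP ?A l F) has_field_derivative
       (\<Sum>b\<in>?A. EP ?A (?g c) (\<lambda>J. F (J(b := Suc (J b))) - F J))) (at (?g c) within ?g ` {0..C})"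
    by (rule has_field_derivative_subset[OF d1 sub])
  have d2: "(?g has_field_derivative (1 / (2 * real N))) (at c within {0..C})"
    using Np by (auto intro!: derivative_eq_intros)
  from DERIV_image_chain[OF d1' d2] show ?thesis by (simp add: o_def E_Nc_EP)
qed

lemma cont_E:
  assumes N: "1 \<le> N" and linF: "lin ({..<N}\<times>{..<N}) K F" and C: "0 \<le> C"
  shows "continuous_on {0..C} (\<lambda>c. E_Nc N c F)"
  unfolding continuous_on_eq_continuous_within
  using Dc[OF N linF C] DERIV_continuous by blast

lemma lin_bounded: "(\<And>J. \<bar>F J\<bar> \<le> B) \<Longrightarrow> lin A B F"
  unfolding lin_def
proof
  fix J assume b: "\<And>J. \<bar>F J\<bar> \<le> B"
  have B: "0 \<le> B" using b[of J] by simp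
  have "B * 1 \<le> B * (1 + (\<Sum>a\<in>A. real (J a)))"
    using B by (intro mult_left_mono) (auto simp: sum_nonneg)
  then show "\<bar>F J\<bar> \<le> B * (1 + (\<Sum>a\<in>A. real (J a)))" using b[of J] by simp
qed

lemma lnser:
  assumes "0 \<le> y" "y < 1"
  shows "(\<lambda>R. y ^ Suc R / real (Suc R)) sums (- ln (1 - y))"
proof -
  have "(\<lambda>n. - ((- (- y)) ^ n) / real n) sums ln (1 + - y)"
    by (rule ln_series') (use assms in auto)
  then have "(\<lambda>n. - (- (y ^ n / real n))) sums (- ln (1 - y))"
    by (intro sums_minus) simp
  then have "(\<lambda>n. y ^ n / real n) sums (- ln (1 - y) + (\<lambda>n. y ^ n / real n) 0)" by simp
  then show ?thesis by (rule iffD2[OF sums_Suc_iff[of "\<lambda>n. y ^ n / real n"]])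
qed

definition fP :: "nat \<Rightarrow> nat \<Rightarrow> real \<Rightarrow> (nat \<times> nat \<Rightarrow> nat) \<Rightarrow> real" where
  "fP q N \<beta> J = ln (partition_fn q N (scaled \<beta> J)) / real N"

definition aP :: "nat \<Rightarrow> nat \<Rightarrow> real \<Rightarrow> (nat \<times> nat \<Rightarrow> nat) \<Rightarrow> nat \<times> nat \<Rightarrow> real" where
  "aP q N \<beta> J b = aa q N (scaled \<beta> J) (fst b) (snd b)"

definition Lsum :: "nat \<Rightarrow> nat \<Rightarrow> real \<Rightarrow> (nat \<times> nat \<Rightarrow> nat) \<Rightarrow> real" where
  "Lsum q N \<beta> J = (\<Sum>b\<in>{..<N}\<times>{..<N}. ln (1 - (1 - exp (- \<beta>)) * aP q N \<beta> J b))"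

context
  fixes q N :: nat and \<beta> :: real
  assumes q: "2 \<le> q" and N: "1 \<le> N" and \<beta>: "0 \<le> \<beta>"
begin

lemma q1: "1 \<le> q" using q by simp

lemma ham_bounds: "0 \<le> hamiltonian N \<sigma> (scaled \<beta> J) \<and>
   hamiltonian N \<sigma> (scaled \<beta> J) \<le> \<beta> * (\<Sum>a\<in>{..<N}\<times>{..<N}. real (J a))"
proof
  show "0 \<le> hamiltonian N \<sigma> (scaled \<beta> J)" unfolding ham_sum scaled_def
    using \<beta> kdelta_01 by (intro sum_nonneg mult_nonneg_nonneg) auto
  have "hamiltonian N \<sigma> (scaled \<beta> J) \<le> (\<Sum>a\<in>{..<N}\<times>{..<N}. \<beta> * real (J a))" unfolding ham_sum scaled_def
    using \<beta> kdelta_01 by (intro sum_mono mult_left_le) (auto)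
  then show "hamiltonian N \<sigma> (scaled \<beta> J) \<le> \<beta> * (\<Sum>a\<in>{..<N}\<times>{..<N}. real (J a))"
    by (simp add: sum_distrib_left)
qed

lemma fP_lin: "lin ({..<N}\<times>{..<N}) (ln q + \<beta>) (fP q N \<beta>)"
  unfolding lin_def
proof
  fix J
  let ?S = "(\<Sum>a\<in>{..<N}\<times>{..<N}. real (J a))"
  let ?Z = "partition_fn q N (scaled \<beta> J)"
  have S: "0 \<le> ?S" by (simp add: sum_nonneg)
  have Np: "0 < real N" using N by simp
  have lq: "0 \<le> ln (real q)" using q by simp
  have up: "?Z \<le> real q ^ N"
  proof -
    have "?Z \<le> (\<Sum>\<sigma>\<in>configs q N. 1)" unfolding partition_fn_def
      using ham_bounds by (intro sum_mono) auto
    then show ?thesis by (simp add: card_configs)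
  qed
  have lo: "real q ^ N * exp (- (\<beta> * ?S)) \<le> ?Z"
  proof -
    have "(\<Sum>\<sigma>\<in>configs q N. exp (- (\<beta> * ?S))) \<le> ?Z" unfolding partition_fn_def
      using ham_bounds by (intro sum_mono) auto
    then show ?thesis by (simp add: card_configs)
  qed
  have qN: "0 < real q ^ N" using q by simp
  have Zp: "0 < ?Z" using Z_pos q1 by blast
  have "ln ?Z \<le> ln (real q ^ N)" using up Zp qN by (subst ln_le_cancel_iff) auto
  also have "\<dots> = real N * ln q" using q by (simp add: ln_realpow)
  finally have u1: "ln ?Z \<le> real N * ln q" .
  have "ln (real q ^ N * exp (- (\<beta> * ?S))) \<le> ln ?Z"
    using lo qN Zp by (subst ln_le_cancel_iff) auto
  then have l1: "real N * ln q - \<beta> * ?S \<le> ln ?Z"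
    using q qN by (simp add: ln_mult ln_realpow)
  have "\<bar>ln ?Z\<bar> \<le> real N * ln q + \<beta> * ?S"
  proof -
    have "0 \<le> real N * ln q" using lq by simp
    moreover have "0 \<le> \<beta> * ?S" using \<beta> S by simp
    ultimately show ?thesis using u1 l1 by linarith
  qed
  then have "\<bar>ln ?Z\<bar> / real N \<le> (real N * ln q + \<beta> * ?S) / real N"
    by (rule divide_right_mono) simp
  also have "\<dots> = ln q + \<beta> * ?S / real N" using Np by (simp add: field_simps)
  also have "\<dots> \<le> ln q + \<beta> * ?S"
  proof -
    have t: "0 \<le> \<beta> * ?S" using \<beta> S by simp
    have "\<beta> * ?S * 1 \<le> \<beta> * ?S * real N" using N t by (intro mult_left_mono) auto
    then have "\<beta> * ?S / real N \<le> \<beta> * ?S" using Np by (simp add: divide_le_eq)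
    then show ?thesis by simp
  qed
  also have "ln q + \<beta> * ?S \<le> (ln q + \<beta>) * (1 + ?S)"
    using lq S \<beta> by (simp add: algebra_simps mult_nonneg_nonneg)
  finally have "\<bar>ln ?Z\<bar> / real N \<le> (ln (real q) + \<beta>) * (1 + ?S)" .
  then show "\<bar>fP q N \<beta> J\<bar> \<le> (ln (real q) + \<beta>) * (1 + ?S)"
    unfolding fP_def abs_divide by simp
qed

lemma aP_bounds: "0 \<le> aP q N \<beta> J b \<and> aP q N \<beta> J b \<le> 1"
  unfolding aP_def using aa_bounds q1 by blast

lemma lnfac_bounds: "- \<beta> \<le> ln (1 - (1 - exp (- \<beta>)) * aP q N \<beta> J b) \<and>
    ln (1 - (1 - exp (- \<beta>)) * aP q N \<beta> J b) \<le> 0"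
proof -
  let ?a = "aP q N \<beta> J b"
  have a: "0 \<le> ?a" "?a \<le> 1" using aP_bounds by auto
  have x: "0 \<le> 1 - exp (- \<beta>)" using \<beta> by auto
  have "(1 - exp (- \<beta>)) * ?a \<le> (1 - exp (- \<beta>))" using mult_left_le[OF a(2) x] .
  then have lo: "exp (- \<beta>) \<le> 1 - (1 - exp (- \<beta>)) * ?a" by simp
  have hi: "1 - (1 - exp (- \<beta>)) * ?a \<le> 1" using a x by simp
  have pos: "0 < 1 - (1 - exp (- \<beta>)) * ?a" using lo by (meson exp_gt_zero less_le_trans)
  show ?thesis
  proof
    have "ln (exp (- \<beta>)) \<le> ln (1 - (1 - exp (- \<beta>)) * ?a)" using lo pos by (subst ln_le_cancel_iff) auto
    then show "- \<beta> \<le> ln (1 - (1 - exp (- \<beta>)) * ?a)" by simp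
    show "ln (1 - (1 - exp (- \<beta>)) * ?a) \<le> 0" using hi pos by simp
  qed
qed

lemma fP_diff: "b \<in> {..<N}\<times>{..<N} \<Longrightarrow>
   fP q N \<beta> (J(b := Suc (J b))) - fP q N \<beta> J = ln (1 - (1 - exp (- \<beta>)) * aP q N \<beta> J b) / real N"
  unfolding fP_def aP_def using lnZ_upd[OF q1 _ \<beta>, of b N J]
  by (simp add: diff_divide_distrib[symmetric])

lemma lnfac_abs: "\<bar>ln (1 - (1 - exp (- \<beta>)) * aP q N \<beta> J b)\<bar> \<le> \<beta>"
  using lnfac_bounds[of J b] \<beta> by linarith

lemma Lsum_bound: "\<bar>Lsum q N \<beta> J\<bar> \<le> real N * real N * \<beta>"
proof -
  have "\<bar>Lsum q N \<beta> J\<bar> \<le> (\<Sum>b\<in>{..<N}\<times>{..<N}. \<bar>ln (1 - (1 - exp (- \<beta>)) * aP q N \<beta> J b)\<bar>)"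
    unfolding Lsum_def by (rule sum_abs)
  also have "\<dots> \<le> (\<Sum>b\<in>{..<N}\<times>{..<N}. \<beta>)"
    using lnfac_abs by (intro sum_mono) auto
  finally show ?thesis by simp
qed

end

definition gfun :: "nat \<Rightarrow> nat \<Rightarrow> real \<Rightarrow> real \<Rightarrow> real" where
  "gfun q N \<beta> c = 1 / 2 * ln (1 - (1 - exp (- \<beta>)) / real q)
     - EP ({..<N}\<times>{..<N}) (c / (2 * real N)) (Lsum q N \<beta>) / (2 * real N ^ 2)"

lemma div_le_self_real:
  assumes "0 \<le> (a::real)" "1 \<le> n" shows "a / n \<le> a"
proof -
  have "a * 1 \<le> a * n" using assms by (intro mult_left_mono) auto
  then show ?thesis using assms by (simp add: divide_le_eq)
qed

context
  fixes q N :: nat and \<beta> :: real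
  assumes q: "2 \<le> q" and N: "1 \<le> N" and \<beta>: "0 \<le> \<beta>"
begin

lemma pressure_eq: "pressure q N \<beta> c = E_Nc N c (fP q N \<beta>)"
  unfolding pressure_def fP_def[abs_def] ..

lemma Lsum_lin: "lin ({..<N}\<times>{..<N}) (real N * real N * \<beta>) (Lsum q N \<beta>)"
  by (rule lin_bounded) (rule Lsum_bound[OF q N \<beta>])

lemma lnfac_lin: "lin ({..<N}\<times>{..<N}) \<beta> (\<lambda>J. ln (1 - (1 - exp (- \<beta>)) * aP q N \<beta> J b) / real N)"
proof (rule lin_bounded)
  fix J
  have "\<bar>ln (1 - (1 - exp (- \<beta>)) * aP q N \<beta> J b) / real N\<bar> \<le> \<bar>ln (1 - (1 - exp (- \<beta>)) * aP q N \<beta> J b)\<bar>"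
    unfolding abs_divide using N by (intro div_le_self_real) auto
  also have "\<dots> \<le> \<beta>" by (rule lnfac_abs[OF q N \<beta>])
  finally show "\<bar>ln (1 - (1 - exp (- \<beta>)) * aP q N \<beta> J b) / real N\<bar> \<le> \<beta>" .
qed

lemma p_deriv:
  assumes C: "0 \<le> C" and c: "c \<in> {0..C}"
  shows "((\<lambda>c. pressure q N \<beta> c) has_field_derivative
      EP ({..<N}\<times>{..<N}) (c / (2 * real N)) (Lsum q N \<beta>) / (2 * real N ^ 2)) (at c within {0..C})"
proof -
  let ?A = "{..<N}\<times>{..<N}"
  let ?l = "c / (2 * real N)"
  have l: "0 \<le> ?l" using c by simp
  have fin: "finite ?A" by simp
  have "(\<Sum>b\<in>?A. EP ?A ?l (\<lambda>J. fP q N \<beta> (J(b := Suc (J b))) - fP q N \<beta> J))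
      = (\<Sum>b\<in>?A. EP ?A ?l (\<lambda>J. ln (1 - (1 - exp (- \<beta>)) * aP q N \<beta> J b) / real N))"
    by (intro sum.cong refl arg_cong[where f="EP ?A ?l"] ext fP_diff[OF q N \<beta>]) auto
  also have "\<dots> = EP ?A ?l (\<lambda>J. \<Sum>b\<in>?A. ln (1 - (1 - exp (- \<beta>)) * aP q N \<beta> J b) / real N)"
    unfolding EP_def
    by (rule Bochner_Integration.integral_sum[symmetric]) (rule lin_int[OF fin l lnfac_lin])
  also have "\<dots> = EP ?A ?l (\<lambda>J. Lsum q N \<beta> J / real N)"
    by (simp add: Lsum_def sum_divide_distrib)
  also have "\<dots> = EP ?A ?l (Lsum q N \<beta>) / real N"
    unfolding EP_def by (rule integral_divide_zero)
  finally have eq: "(\<Sum>b\<in>?A. EP ?A ?l (\<lambda>J. fP q N \<beta> (J(b := Suc (J b))) - fP q N \<beta> J)) * (1 / (2 * real N))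
      = EP ?A ?l (Lsum q N \<beta>) / (2 * real N ^ 2)"
    by (simp add: power2_eq_square)
  show ?thesis
    using Dc[OF N fP_lin[OF q N \<beta>] C c] unfolding eq pressure_eq .
qed

lemma ann_deriv: "((\<lambda>c. annealed_pressure q \<beta> c) has_field_derivative 1 / 2 * ln (1 - (1 - exp (- \<beta>)) / real q)) (at c within S)"
  unfolding annealed_pressure_def by (auto intro!: derivative_eq_intros)

lemma EP0: "finite A \<Longrightarrow> EP A 0 F = F (\<lambda>_. 0)"
  by (simp add: EP_def PL_def poisson_dist_def)

lemma p0: "pressure q N \<beta> 0 = ln (real q)"
proof -
  have "pressure q N \<beta> 0 = fP q N \<beta> (\<lambda>_. 0)" by (simp add: pressure_eq E_Nc_EP EP0)
  also have "scaled \<beta> (\<lambda>_. 0) = (\<lambda>_. 0)" by (simp add: scaled_def fun_eq_iff)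
  then have "fP q N \<beta> (\<lambda>_. 0) = ln (real q ^ N) / real N"
    by (simp add: fP_def partition_fn_def hamiltonian_def card_configs)
  also have "\<dots> = ln (real q)" using q N by (simp add: ln_realpow)
  finally show ?thesis .
qed

lemma ann0: "annealed_pressure q \<beta> 0 = ln (real q)"
  by (simp add: annealed_pressure_def)

lemma FTC:
  assumes c: "0 \<le> c"
  shows "(gfun q N \<beta> has_integral (annealed_pressure q \<beta> c - pressure q N \<beta> c)) {0..c}"
proof -
  have "(gfun q N \<beta> has_integral
     ((annealed_pressure q \<beta> c - pressure q N \<beta> c) - (annealed_pressure q \<beta> 0 - pressure q N \<beta> 0))) {0..c}"
  proof (rule fundamental_theorem_of_calculus[OF c])
    fix x assume x: "x \<in> {0..c}"
    have "((\<lambda>c. annealed_pressure q \<beta> c - pressure q N \<beta> c) has_field_derivative gfun q N \<beta> x) (at x within {0..c})"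
      unfolding gfun_def by (rule DERIV_diff[OF ann_deriv p_deriv[OF c x]])
    then show "((\<lambda>c. annealed_pressure q \<beta> c - pressure q N \<beta> c) has_vector_derivative gfun q N \<beta> x) (at x within {0..c})"
      by (simp add: has_real_derivative_iff_has_vector_derivative)
  qed
  then show ?thesis by (simp add: p0 ann0)
qed

end

definition Phi :: "nat \<Rightarrow> nat \<Rightarrow> real \<Rightarrow> nat \<Rightarrow> (nat \<times> nat \<Rightarrow> nat) \<Rightarrow> real" where
  "Phi q N \<beta> R J = (1 / real N ^ 2) * (\<Sum>p\<in>{..<N}\<times>{..<N}. aP q N \<beta> J p ^ R) - 1 / real q ^ R"

definition u :: "nat \<Rightarrow> nat \<Rightarrow> real \<Rightarrow> nat \<Rightarrow> real \<Rightarrow> real" where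
  "u q N \<beta> R c = 1 / 2 * ((1 - exp (- \<beta>)) ^ Suc R / real (Suc R)) *
     (\<Sum>s\<in>PiE {..<Suc R} (\<lambda>_. {1..q}). replica_avg q N \<beta> c (Suc R)
        (\<lambda>\<Sigma>. (emp_measure N (Suc R) \<Sigma> s - 1 / real q ^ Suc R)^2))"

lemma abs_diff_01: "0 \<le> a \<Longrightarrow> a \<le> 1 \<Longrightarrow> 0 \<le> b \<Longrightarrow> b \<le> 1 \<Longrightarrow> \<bar>a - b\<bar> \<le> (1::real)"
  unfolding abs_le_iff by linarith

lemma EP_bounded:
  assumes "\<And>J. \<bar>F J\<bar> \<le> B"
  shows "\<bar>EP A l F\<bar> \<le> B"
proof -
  have i: "integrable (PL A l) F"
    using assms by (intro measure_pmf.integrable_const_bound[where B=B]) auto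
  have "\<bar>EP A l F\<bar> \<le> measure_pmf.expectation (PL A l) (\<lambda>J. norm (F J))"
    unfolding EP_def using integral_norm_bound[of "PL A l" F] by simp
  also have "\<dots> \<le> measure_pmf.expectation (PL A l) (\<lambda>J. B)"
    using assms i by (intro integral_mono) auto
  finally show ?thesis by simp
qed

lemma replica_avg_eq:
  "replica_avg q N \<beta> c R (\<lambda>\<Sigma>. (emp_measure N R \<Sigma> s - 1 / real q ^ R)^2) = E_Nc N c (\<lambda>J. Psi q N R s (scaled \<beta> J))"
  unfolding replica_avg_def Psi_def ..

lemma emp_bounds:
  assumes N: "1 \<le> N"
  shows "0 \<le> emp_measure N R \<Sigma> s \<and> emp_measure N R \<Sigma> s \<le> 1"
proof -
  have b: "0 \<le> (\<Prod>r<R. kdelta (\<Sigma> r i) (s r)) \<and> (\<Prod>r<R. kdelta (\<Sigma> r i) (s r)) \<le> 1" for i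
    using kdelta_01 by (auto intro!: prod_nonneg prod_le_1)
  have s0: "0 \<le> (\<Sum>i<N. \<Prod>r<R. kdelta (\<Sigma> r i) (s r))" using b by (intro sum_nonneg) auto
  have "(\<Sum>i<N. \<Prod>r<R. kdelta (\<Sigma> r i) (s r)) \<le> (\<Sum>i<N. 1)" using b by (intro sum_mono) auto
  then have s1: "(\<Sum>i<N. \<Prod>r<R. kdelta (\<Sigma> r i) (s r)) \<le> real N" by simp
  show ?thesis unfolding emp_measure_def using s0 s1 N by (auto simp: divide_le_eq)
qed

lemma Psi_bounds:
  assumes q: "1 \<le> q" and N: "1 \<le> N"
  shows "0 \<le> Psi q N R s M \<and> Psi q N R s M \<le> 1"
proof
  let ?w = "\<lambda>\<Sigma>. \<Prod>r<R. gibbs q N M (\<Sigma> r)"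
  have w: "0 \<le> ?w \<Sigma>" for \<Sigma> by (rule w_nonneg[OF q])
  show "0 \<le> Psi q N R s M" unfolding Psi_def using w by (intro sum_nonneg mult_nonneg_nonneg) auto
  have c: "0 < 1 / real q ^ R" "1 / real q ^ R \<le> 1" using q by auto
  have sq: "(emp_measure N R \<Sigma> s - 1 / real q ^ R)^2 \<le> 1" for \<Sigma>
    using emp_bounds[OF N, of R \<Sigma> s] c by (subst abs_square_le_1) (intro abs_diff_01, auto)
  have "Psi q N R s M \<le> (\<Sum>\<Sigma>\<in>replicas q N R. 1 * ?w \<Sigma>)"
    unfolding Psi_def using w sq by (intro sum_mono mult_right_mono) auto
  also have "\<dots> = 1" using w_sum[OF q] by simp
  finally show "Psi q N R s M \<le> 1" .
qed

context
  fixes q N :: nat and \<beta> :: real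
  assumes q: "2 \<le> q" and N: "1 \<le> N" and \<beta>: "0 \<le> \<beta>"
begin

lemma q1': "1 \<le> q" using q by simp

lemma Psi_lin: "lin A 1 (\<lambda>J. Psi q N R s (scaled \<beta> J))"
  by (rule lin_bounded) (use Psi_bounds[OF q1' N] in auto)

lemma Phi_eq: "(\<Sum>s\<in>PiE {..<R} (\<lambda>_. {1..q}). Psi q N R s (scaled \<beta> J)) = Phi q N \<beta> R J"
  unfolding Phi_def aP_def by (rule replica_identity[OF q1' N])

lemma Phi_bound: "\<bar>Phi q N \<beta> R J\<bar> \<le> 1"
proof -
  have a: "0 \<le> aP q N \<beta> J p ^ R \<and> aP q N \<beta> J p ^ R \<le> 1" for p
    using aP_bounds[OF q N \<beta>, of J p] by (auto intro: power_le_one)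
  have s0: "0 \<le> (\<Sum>p\<in>{..<N}\<times>{..<N}. aP q N \<beta> J p ^ R)" using a by (intro sum_nonneg) auto
  have "(\<Sum>p\<in>{..<N}\<times>{..<N}. aP q N \<beta> J p ^ R) \<le> (\<Sum>p\<in>{..<N}\<times>{..<N}. 1)" using a by (intro sum_mono) auto
  then have s1: "(\<Sum>p\<in>{..<N}\<times>{..<N}. aP q N \<beta> J p ^ R) \<le> real N ^ 2" by (simp add: power2_eq_square)
  have Np: "0 < real N ^ 2" using N by simp
  have t0: "0 \<le> (1 / real N ^ 2) * (\<Sum>p\<in>{..<N}\<times>{..<N}. aP q N \<beta> J p ^ R)" using s0 Np by simp
  have t1: "(1 / real N ^ 2) * (\<Sum>p\<in>{..<N}\<times>{..<N}. aP q N \<beta> J p ^ R) \<le> 1"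
    using s1 Np by (simp add: divide_le_eq)
  have c: "0 < 1 / real q ^ R" "1 / real q ^ R \<le> 1" using q by auto
  show ?thesis unfolding Phi_def using t0 t1 c by (intro abs_diff_01) auto
qed

lemma Phi_lin: "lin A 1 (Phi q N \<beta> R)"
  by (rule lin_bounded) (rule Phi_bound)

lemma u_eq:
  assumes c: "0 \<le> c"
  shows "u q N \<beta> R c = 1 / 2 * ((1 - exp (- \<beta>)) ^ Suc R / real (Suc R)) *
     EP ({..<N}\<times>{..<N}) (c / (2 * real N)) (Phi q N \<beta> (Suc R))"
proof -
  let ?A = "{..<N}\<times>{..<N}"
  let ?l = "c / (2 * real N)"
  have l: "0 \<le> ?l" using c by simp
  have "(\<Sum>s\<in>PiE {..<Suc R} (\<lambda>_. {1..q}). replica_avg q N \<beta> c (Suc R)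
        (\<lambda>\<Sigma>. (emp_measure N (Suc R) \<Sigma> s - 1 / real q ^ Suc R)^2))
     = (\<Sum>s\<in>PiE {..<Suc R} (\<lambda>_. {1..q}). EP ?A ?l (\<lambda>J. Psi q N (Suc R) s (scaled \<beta> J)))"
    by (simp only: replica_avg_eq E_Nc_EP)
  also have "\<dots> = EP ?A ?l (\<lambda>J. \<Sum>s\<in>PiE {..<Suc R} (\<lambda>_. {1..q}). Psi q N (Suc R) s (scaled \<beta> J))"
    unfolding EP_def
    by (rule Bochner_Integration.integral_sum[symmetric]) (rule lin_int[OF _ l Psi_lin], simp)
  also have "(\<lambda>J. \<Sum>s\<in>PiE {..<Suc R} (\<lambda>_. {1..q}). Psi q N (Suc R) s (scaled \<beta> J)) = Phi q N \<beta> (Suc R)"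
    by (rule ext) (rule Phi_eq)
  finally show ?thesis by (simp add: u_def)
qed

lemma x_bounds: "0 \<le> 1 - exp (- \<beta>)" "1 - exp (- \<beta>) < 1"
  using \<beta> by auto

lemma u_bound:
  assumes c: "0 \<le> c"
  shows "\<bar>u q N \<beta> R c\<bar> \<le> (1 - exp (- \<beta>)) ^ Suc R / 2"
proof -
  let ?x = "1 - exp (- \<beta>)"
  have e: "\<bar>EP ({..<N}\<times>{..<N}) (c / (2 * real N)) (Phi q N \<beta> (Suc R))\<bar> \<le> 1"
    by (rule EP_bounded) (rule Phi_bound)
  have xp: "0 \<le> ?x ^ Suc R" using x_bounds by simp
  have "\<bar>u q N \<beta> R c\<bar> = 1 / 2 * (?x ^ Suc R / real (Suc R)) *
     \<bar>EP ({..<N}\<times>{..<N}) (c / (2 * real N)) (Phi q N \<beta> (Suc R))\<bar>"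
  proof -
    have k: "0 \<le> 1 / 2 * (?x ^ Suc R / real (Suc R))" using xp by simp
    show ?thesis unfolding u_eq[OF c] by (subst abs_mult) (simp only: abs_of_nonneg[OF k])
  qed
  also have "\<dots> \<le> 1 / 2 * (?x ^ Suc R / real (Suc R)) * 1"
    using e xp by (intro mult_left_mono) auto
  also have "\<dots> \<le> 1 / 2 * ?x ^ Suc R"
  proof -
    have "?x ^ Suc R / real (Suc R) \<le> ?x ^ Suc R" by (rule div_le_self_real[OF xp]) simp
    then have "1 / 2 * (?x ^ Suc R / real (Suc R)) \<le> 1 / 2 * ?x ^ Suc R" by (rule mult_left_mono) simp
    then show ?thesis by (simp only: mult_1_right)
  qed
  finally show ?thesis by simp
qed

lemma u_nonneg:
  assumes c: "0 \<le> c"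
  shows "0 \<le> u q N \<beta> R c"
  unfolding u_def replica_avg_eq E_Nc_EP EP_def
  using x_bounds Psi_bounds[OF q1' N]
  by (intro mult_nonneg_nonneg sum_nonneg Bochner_Integration.integral_nonneg) auto

lemma u_cont:
  assumes c: "0 \<le> c"
  shows "continuous_on {0..c} (u q N \<beta> R)"
  unfolding u_def[abs_def] replica_avg_eq
  by (intro continuous_on_mult_left continuous_on_sum cont_E[OF N Psi_lin c])

end

lemma alg_aux:
  fixes x k n Q :: real and a :: "'a \<Rightarrow> real"
  shows "n * (\<Sum>p\<in>A. (x * a p) ^ m / k) - (x / Q) ^ m / k = x ^ m / k * (n * (\<Sum>p\<in>A. a p ^ m) - 1 / Q ^ m)"
proof -
  have "(\<Sum>p\<in>A. (x * a p) ^ m / k) = x ^ m / k * (\<Sum>p\<in>A. a p ^ m)"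
    by (simp add: power_mult_distrib sum_distrib_left mult_ac)
  then show ?thesis by (simp add: power_divide algebra_simps)
qed

context
  fixes q N :: nat and \<beta> :: real
  assumes q: "2 \<le> q" and N: "1 \<le> N" and \<beta>: "0 \<le> \<beta>"
begin

lemma u_sums:
  assumes c: "0 \<le> c"
  shows "(\<lambda>R. u q N \<beta> R c) sums gfun q N \<beta> c"
proof -
  let ?x = "1 - exp (- \<beta>)"
  let ?A = "{..<N}\<times>{..<N}"
  let ?l = "c / (2 * real N)"
  let ?z = "?x / real q"
  have l: "0 \<le> ?l" using c by simp
  have x0: "0 \<le> ?x" and x1: "?x < 1" using \<beta> by auto
  have qp: "1 < real q" using q by simp
  have z0: "0 \<le> ?z" using x0 qp by simp
  have xq: "?x < real q" using x1 qp by linarith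
  have z1: "?z < 1" using xq qp by (simp add: divide_less_eq)
  define f where "f i J = ?x ^ Suc i / real (Suc i) * Phi q N \<beta> (Suc i) J" for i J
  define V where "V J = ln (1 - ?z) - Lsum q N \<beta> J / real N ^ 2" for J
  have fb: "\<bar>f i J\<bar> \<le> ?x ^ Suc i" for i J
  proof -
    have xp: "0 \<le> ?x ^ Suc i" using x0 by simp
    have k: "0 \<le> ?x ^ Suc i / real (Suc i)" using xp by simp
    have "\<bar>f i J\<bar> = ?x ^ Suc i / real (Suc i) * \<bar>Phi q N \<beta> (Suc i) J\<bar>"
      unfolding f_def by (simp only: abs_mult abs_of_nonneg[OF k])
    also have "\<dots> \<le> ?x ^ Suc i / real (Suc i) * 1"
      by (rule mult_left_mono[OF Phi_bound[OF q N \<beta>] k])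
    also have "\<dots> \<le> ?x ^ Suc i" using div_le_self_real[OF xp, of "real (Suc i)"] by simp
    finally show ?thesis .
  qed
  have sg: "summable (\<lambda>i. ?x ^ Suc i)"
    using summable_mult[OF summable_geometric[of ?x], of ?x] x0 x1 by simp
  have pw: "(\<lambda>i. f i J) sums V J" for J
  proof -
    have y: "0 \<le> ?x * aP q N \<beta> J p" "?x * aP q N \<beta> J p < 1" for p
    proof -
      have a: "0 \<le> aP q N \<beta> J p" "aP q N \<beta> J p \<le> 1" using aP_bounds[OF q N \<beta>] by auto
      show "0 \<le> ?x * aP q N \<beta> J p" using a x0 by simp
      have "?x * aP q N \<beta> J p \<le> ?x" using mult_left_le[OF a(2) x0] .
      then show "?x * aP q N \<beta> J p < 1" using x1 by linarith
    qed
    have s1: "(\<lambda>R. \<Sum>p\<in>?A. (?x * aP q N \<beta> J p) ^ Suc R / real (Suc R)) sums (\<Sum>p\<in>?A. - ln (1 - ?x * aP q N \<beta> J p))"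
      by (rule sums_sum) (rule lnser[OF y])
    have s2: "(\<lambda>R. 1 / real N ^ 2 * (\<Sum>p\<in>?A. (?x * aP q N \<beta> J p) ^ Suc R / real (Suc R)) - ?z ^ Suc R / real (Suc R))
       sums (1 / real N ^ 2 * (\<Sum>p\<in>?A. - ln (1 - ?x * aP q N \<beta> J p)) - (- ln (1 - ?z)))"
      by (intro sums_diff sums_mult s1 lnser z0 z1)
    have e1: "1 / real N ^ 2 * (\<Sum>p\<in>?A. (?x * aP q N \<beta> J p) ^ Suc R / real (Suc R)) - ?z ^ Suc R / real (Suc R)
        = f R J" for R
      unfolding f_def Phi_def by (rule alg_aux)
    have e2: "1 / real N ^ 2 * (\<Sum>p\<in>?A. - ln (1 - ?x * aP q N \<beta> J p)) - (- ln (1 - ?z)) = V J"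
      unfolding V_def Lsum_def by (simp add: sum_negf)
    show ?thesis using s2 unfolding e1 e2 .
  qed
  have int_f: "integrable (PL ?A ?l) (f i)" for i
    by (rule lin_int[OF _ l lin_bounded[OF fb]]) simp
  have "(\<lambda>i. integral\<^sup>L (PL ?A ?l) (f i)) sums (\<integral>J. (\<Sum>i. f i J) \<partial>PL ?A ?l)"
  proof (rule sums_integral)
    show "integrable (PL ?A ?l) (f i)" for i by (rule int_f)
    show "AE J in PL ?A ?l. summable (\<lambda>i. norm (f i J))"
      by (intro AE_I2 summable_comparison_test'[OF sg]) (use fb in simp)
    show "summable (\<lambda>i. \<integral>J. norm (f i J) \<partial>PL ?A ?l)"
    proof (rule summable_comparison_test'[OF sg])
      fix i
      have "\<bar>EP ?A ?l (\<lambda>J. norm (f i J))\<bar> \<le> ?x ^ Suc i"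
        by (rule EP_bounded) (use fb in simp)
      then show "norm (\<integral>J. norm (f i J) \<partial>PL ?A ?l) \<le> ?x ^ Suc i" by (simp add: EP_def)
    qed
  qed
  also have "(\<integral>J. (\<Sum>i. f i J) \<partial>PL ?A ?l) = EP ?A ?l V"
    unfolding EP_def using pw by (intro Bochner_Integration.integral_cong refl) (simp add: sums_iff)
  also have "EP ?A ?l V = ln (1 - ?z) - EP ?A ?l (Lsum q N \<beta>) / real N ^ 2"
  proof -
    have iL: "integrable (PL ?A ?l) (\<lambda>J. Lsum q N \<beta> J / real N ^ 2)"
      using lin_int[OF _ l Lsum_lin[OF q N \<beta>]] by simp
    show ?thesis unfolding EP_def V_def
      by (subst Bochner_Integration.integral_diff[OF _ iL]) (auto simp: integral_divide_zero)
  qed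
  finally have S: "(\<lambda>i. EP ?A ?l (f i)) sums (ln (1 - ?z) - EP ?A ?l (Lsum q N \<beta>) / real N ^ 2)"
    by (simp add: EP_def)
  have ue: "u q N \<beta> R c = 1 / 2 * EP ?A ?l (f R)" for R
    unfolding u_eq[OF q N \<beta> c] f_def EP_def by simp
  have "(\<lambda>R. 1 / 2 * EP ?A ?l (f R)) sums (1 / 2 * (ln (1 - ?z) - EP ?A ?l (Lsum q N \<beta>) / real N ^ 2))"
    by (rule sums_mult[OF S])
  moreover have "1 / 2 * (ln (1 - ?z) - EP ?A ?l (Lsum q N \<beta>) / real N ^ 2) = gfun q N \<beta> c"
    unfolding gfun_def by (simp add: algebra_simps)
  ultimately show ?thesis unfolding ue by simp
qed

end

theorem mainTheorem4:
  fixes q N :: nat and \<beta> c :: real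
  assumes "q \<ge> 2" and "N \<ge> 1" and "\<beta> \<ge> 0" and "c \<ge> 0"
  shows "(\<lambda>R. 1 / 2 * ((1 - exp (- \<beta>)) ^ Suc R / real (Suc R)) *
            (\<Sum>s\<in>PiE {..<Suc R} (\<lambda>_. {1..q}).
               integral {0..c} (\<lambda>c'. replica_avg q N \<beta> c' (Suc R)
                  (\<lambda>\<Sigma>. (emp_measure N (Suc R) \<Sigma> s - 1 / real q ^ Suc R)^2))))
         sums (annealed_pressure q \<beta> c - pressure q N \<beta> c)
       \<and> pressure q N \<beta> c \<le> annealed_pressure q \<beta> c"
proof -
  note q = assms(1) and N = assms(2) and \<beta> = assms(3) and c = assms(4)
  let ?x = "1 - exp (- \<beta>)"
  define T where "T R = 1 / 2 * ((1 - exp (- \<beta>)) ^ Suc R / real (Suc R)) *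
            (\<Sum>s\<in>PiE {..<Suc R} (\<lambda>_. {1..q}).
               integral {0..c} (\<lambda>c'. replica_avg q N \<beta> c' (Suc R)
                  (\<lambda>\<Sigma>. (emp_measure N (Suc R) \<Sigma> s - 1 / real q ^ Suc R)^2)))" for R
  have x0: "0 \<le> ?x" and x1: "?x < 1" using \<beta> by auto
  have uint: "u q N \<beta> R integrable_on {0..c}" for R
    by (rule integrable_continuous_interval[OF u_cont[OF q N \<beta> c]])
  have TR: "integral {0..c} (u q N \<beta> R) = T R" for R
  proof -
    have ra: "(\<lambda>c'. replica_avg q N \<beta> c' (Suc R)
                  (\<lambda>\<Sigma>. (emp_measure N (Suc R) \<Sigma> s - 1 / real q ^ Suc R)^2)) integrable_on {0..c}" for s
      unfolding replica_avg_eq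
      by (rule integrable_continuous_interval[OF cont_E[OF N Psi_lin[OF q N \<beta>] c]])
    show ?thesis unfolding u_def[abs_def] T_def
      by (subst integral_mult_right, subst integral_sum) (use ra in \<open>auto intro: finite_PiE\<close>)
  qed
  have FTC': "(gfun q N \<beta> has_integral (annealed_pressure q \<beta> c - pressure q N \<beta> c)) {0..c}"
    by (rule FTC[OF q N \<beta> c])
  define B where "B = (\<Sum>R. ?x ^ Suc R / 2)"
  have sg: "summable (\<lambda>R. ?x ^ Suc R / 2)"
    using summable_mult[OF summable_geometric[of ?x], of ?x] x0 x1
    by (intro summable_divide) simp
  have bound: "norm (\<Sum>R<k. u q N \<beta> R c') \<le> B" if c': "c' \<in> {0..c}" for k c'
  proof -
    have "norm (\<Sum>R<k. u q N \<beta> R c') \<le> (\<Sum>R<k. \<bar>u q N \<beta> R c'\<bar>)"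
      by (simp add: sum_abs)
    also have "\<dots> \<le> (\<Sum>R<k. ?x ^ Suc R / 2)"
      using c' by (intro sum_mono u_bound[OF q N \<beta>]) auto
    also have "\<dots> \<le> B" unfolding B_def
      by (rule sum_le_suminf[OF sg]) (use x0 in auto)
    finally show ?thesis .
  qed
  have DC: "(\<lambda>k. integral {0..c} (\<lambda>c'. \<Sum>R<k. u q N \<beta> R c')) \<longlonglongrightarrow> integral {0..c} (gfun q N \<beta>)"
  proof (rule dominated_convergence(2)[where h="\<lambda>_. B"])
    show "(\<lambda>c'. \<Sum>R<k. u q N \<beta> R c') integrable_on {0..c}" for k
      by (rule integrable_sum) (use uint in auto)
    show "(\<lambda>_. B) integrable_on {0..c}" by (rule integrable_const_ivl)
    show "norm (\<Sum>R<k. u q N \<beta> R x) \<le> B" if "x \<in> {0..c}" for k x by (rule bound[OF that])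
    show "(\<lambda>k. \<Sum>R<k. u q N \<beta> R x) \<longlonglongrightarrow> gfun q N \<beta> x" if "x \<in> {0..c}" for x
      using u_sums[OF q N \<beta>, of x] that by (simp add: sums_def)
  qed
  have "(\<lambda>k. integral {0..c} (\<lambda>c'. \<Sum>R<k. u q N \<beta> R c')) = (\<lambda>k. \<Sum>R<k. T R)"
  proof
    fix k
    show "integral {0..c} (\<lambda>c'. \<Sum>R<k. u q N \<beta> R c') = (\<Sum>R<k. T R)"
      by (subst integral_sum) (use uint TR in auto)
  qed
  with DC have "(\<lambda>k. \<Sum>R<k. T R) \<longlonglongrightarrow> annealed_pressure q \<beta> c - pressure q N \<beta> c"
    using integral_unique[OF FTC'] by simp
  then have S: "T sums (annealed_pressure q \<beta> c - pressure q N \<beta> c)" by (simp add: sums_def)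
  have Tnn: "0 \<le> T R" for R
    unfolding TR[symmetric] by (rule integral_nonneg[OF uint]) (rule u_nonneg[OF q N \<beta>], auto)
  have "0 \<le> annealed_pressure q \<beta> c - pressure q N \<beta> c"
    using suminf_nonneg[OF sums_summable[OF S] Tnn] sums_unique[OF S] by simp
  then show ?thesis using S unfolding T_def by simp
qed

end
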